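(* Let $\lambda\in C^{1,\alpha}([0,T];M)$ with $\alpha\in(0,1]$ and $\|\lambda\|_{C^{1/2}}\le1$. There is $c=c(M,T)$ such that for all $0\le u\le s\le s+\delta\le T$ and $\epsilon\in(0,1]$, $$|f(u,s+\delta,\epsilon)-f(u,s,\epsilon)|\le c\min(u\delta^\alpha,\delta u^\alpha),$$ $$|\partial_sf(u,s+\delta,\epsilon)-\partial_sf(u,s,\epsilon)|\le c\Big(1+\frac{\epsilon}{\alpha}\Big)\min(u^\alpha,\delta^\alpha).$$
   Context: $\lambda\in C^{1,\alpha}([0,T];M)$ means $\lambda'$ exists and is continuous, $\sup|\lambda|,\sup|\lambda'|\le M$, and $|\lambda'(t)-\lambda'(s)|\le M|t-s|^\alpha$. $\|\lambda\|_{C^{1/2}}=\sup_{s\ne t}|\lambda(t)-\lambda(s)|/|t-s|^{1/2}$. For $s\in[0,T]$, $\epsilon\in(0,1]$, $f(u,s,\epsilon)$, $0\le u\le s$, is the (unique, existing) solution of $\partial_uf=\frac{-2}{f}+\lambda'(s-u)$, $f(0,s,\epsilon)=i\epsilon$; $\partial_s$ is the partial derivative in $s$. *)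

theory Defs
  imports "HOL-Analysis.Analysis"
begin

definition C1alpha :: "real \<Rightarrow> real \<Rightarrow> real \<Rightarrow> (real \<Rightarrow> real) \<Rightarrow> (real \<Rightarrow> real) \<Rightarrow> bool" where
  "C1alpha T \<alpha> M lam dlam \<longleftrightarrow>
     (\<forall>t\<in>{0..T}. (lam has_real_derivative dlam t) (at t within {0..T})) \<and>
     continuous_on {0..T} dlam \<and>
     (\<forall>t\<in>{0..T}. \<bar>lam t\<bar> \<le> M \<and> \<bar>dlam t\<bar> \<le> M) \<and>
     (\<forall>t\<in>{0..T}. \<forall>s\<in>{0..T}. \<bar>dlam t - dlam s\<bar> \<le> M * \<bar>t - s\<bar> powr \<alpha>)"

definition half_holder_le1 :: "real \<Rightarrow> (real \<Rightarrow> real) \<Rightarrow> bool" where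
  "half_holder_le1 T lam \<longleftrightarrow>
     (\<forall>s\<in>{0..T}. \<forall>t\<in>{0..T}. s \<noteq> t \<longrightarrow> \<bar>lam t - lam s\<bar> / \<bar>t - s\<bar> powr (1/2) \<le> 1)"

definition is_sol :: "(real \<Rightarrow> real) \<Rightarrow> real \<Rightarrow> real \<Rightarrow> (real \<Rightarrow> complex) \<Rightarrow> bool" where
  "is_sol dlam s \<epsilon> g \<longleftrightarrow> g 0 = \<i> * complex_of_real \<epsilon> \<and>
     (\<forall>u\<in>{0..s}. (g has_vector_derivative (-2 / g u + complex_of_real (dlam (s - u)))) (at u within {0..s}))"

definition fsol :: "(real \<Rightarrow> real) \<Rightarrow> real \<Rightarrow> real \<Rightarrow> real \<Rightarrow> complex" where
  "fsol dlam u s \<epsilon> = (THE z. \<exists>g. is_sol dlam s \<epsilon> g \<and> g u = z)"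

definition ds_fsol :: "real \<Rightarrow> (real \<Rightarrow> real) \<Rightarrow> real \<Rightarrow> real \<Rightarrow> real \<Rightarrow> complex" where
  "ds_fsol T dlam u s \<epsilon> = vector_derivative (\<lambda>s'. fsol dlam u s' \<epsilon>) (at s within {u..T})"

end

theory Submission
  imports Defs
begin

lemma at_Icc_interior:
  fixes a b x :: real
  assumes "a < x" "x < b"
  shows "at x within {a<..<b} = at x"
  by (rule at_within_open) (use assms in auto)

lemma mono_within:
  fixes \<psi> \<psi>' :: "real \<Rightarrow> real"
  assumes "a \<le> b"
    and d: "\<And>x. x \<in> {a..b} \<Longrightarrow> (\<psi> has_real_derivative \<psi>' x) (at x within {a..b})"
    and n: "\<And>x. x \<in> {a..b} \<Longrightarrow> \<psi>' x \<le> 0"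
  shows "\<psi> b \<le> \<psi> a"
proof (rule DERIV_nonpos_imp_decreasing_open[OF assms(1)])
  show "continuous_on {a..b} \<psi>"
    unfolding continuous_on_eq_continuous_within using d DERIV_continuous by blast
  fix x assume x: "a < x" "x < b"
  have "(\<psi> has_real_derivative \<psi>' x) (at x within {a<..<b})"
    by (rule DERIV_subset[OF d[of x]]) (use x in auto)
  then have "(\<psi> has_real_derivative \<psi>' x) (at x)" using at_Icc_interior[OF x] by simp
  then show "\<exists>y. (\<psi> has_real_derivative y) (at x) \<and> y \<le> 0" using n[of x] x by auto
qed

lemma bound_within:
  fixes f f' :: "real \<Rightarrow> complex" and \<phi> \<phi>' :: "real \<Rightarrow> real"
  assumes "a \<le> b"
    and d: "\<And>x. x \<in> {a..b} \<Longrightarrow> (f has_vector_derivative f' x) (at x within {a..b})"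
    and p: "\<And>x. x \<in> {a..b} \<Longrightarrow> (\<phi> has_real_derivative \<phi>' x) (at x within {a..b})"
    and n: "\<And>x. x \<in> {a..b} \<Longrightarrow> cmod (f' x) \<le> \<phi>' x"
  shows "cmod (f b - f a) \<le> \<phi> b - \<phi> a"
proof (cases "a = b")
  case True then show ?thesis by simp
next
  case False
  with assms(1) have ab: "a < b" by simp
  show ?thesis
  proof (rule differentiable_bound_general[OF ab, where f'=f' and \<phi>'=\<phi>'])
    show "continuous_on {a..b} f"
      unfolding continuous_on_eq_continuous_within using d has_vector_derivative_continuous by blast
    show "continuous_on {a..b} \<phi>"
      unfolding continuous_on_eq_continuous_within using p DERIV_continuous by blast
    fix x assume x: "a < x" "x < b"
    have "(f has_vector_derivative f' x) (at x within {a<..<b})"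
      by (rule has_vector_derivative_within_subset[OF d[of x]]) (use x in auto)
    then show "(f has_vector_derivative f' x) (at x)" using at_Icc_interior[OF x] by simp
    have "(\<phi> has_real_derivative \<phi>' x) (at x within {a<..<b})"
      by (rule DERIV_subset[OF p[of x]]) (use x in auto)
    then have "(\<phi> has_real_derivative \<phi>' x) (at x)" using at_Icc_interior[OF x] by simp
    then show "(\<phi> has_vector_derivative \<phi>' x) (at x)"
      by (simp add: has_real_derivative_iff_has_vector_derivative)
    show "cmod (f' x) \<le> \<phi>' x" using n x by auto
  qed
qed

lemma vd_exp:
  fixes g :: "real \<Rightarrow> complex"
  assumes "(g has_vector_derivative g') (at x within S)"
  shows "((\<lambda>r. exp (g r)) has_vector_derivative (g' * exp (g x))) (at x within S)"
proof -
  have "(exp has_field_derivative exp (g x)) (at (g x) within g ` S)"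
    by (rule has_field_derivative_at_within) (rule DERIV_exp)
  from field_vector_diff_chain_within[OF assms this] show ?thesis by (simp add: o_def)
qed

lemma vd_inverse:
  fixes g :: "real \<Rightarrow> complex"
  assumes "(g has_vector_derivative g') (at x within S)" "g x \<noteq> 0"
  shows "((\<lambda>r. 1 / g r) has_vector_derivative (- g' / (g x)^2)) (at x within S)"
proof -
  have "((\<lambda>z. 1 / z) has_field_derivative - 1 / (g x)^2) (at (g x) within g ` S)"
    by (rule has_field_derivative_at_within)
       (use assms(2) in \<open>auto intro!: derivative_eq_intros simp: power2_eq_square\<close>)
  from field_vector_diff_chain_within[OF assms(1) this] show ?thesis by (simp add: o_def)
qed

lemma vd_Re:
  fixes g :: "real \<Rightarrow> complex"
  assumes "(g has_vector_derivative g') F"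
  shows "((\<lambda>r. Re (g r)) has_real_derivative (Re g')) F"
  using bounded_linear.has_vector_derivative[OF bounded_linear_Re assms]
  by (simp add: has_real_derivative_iff_has_vector_derivative)

lemma vd_Im:
  fixes g :: "real \<Rightarrow> complex"
  assumes "(g has_vector_derivative g') F"
  shows "((\<lambda>r. Im (g r)) has_real_derivative (Im g')) F"
  using bounded_linear.has_vector_derivative[OF bounded_linear_Im assms]
  by (simp add: has_real_derivative_iff_has_vector_derivative)

lemma LL:
  fixes D a b :: "real \<Rightarrow> complex" and \<rho> \<rho>' H h :: "real \<Rightarrow> real"
  assumes u: "0 \<le> u"
  and dD: "\<And>r. r \<in> {0..u} \<Longrightarrow> (D has_vector_derivative (a r * D r + b r)) (at r within {0..u})"
  and ca: "continuous_on {0..u} a"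
  and d\<rho>: "\<And>r. r \<in> {0..u} \<Longrightarrow> (\<rho> has_real_derivative \<rho>' r) (at r within {0..u})"
  and ra: "\<And>r. r \<in> {0..u} \<Longrightarrow> Re (a r) \<le> \<rho>' r"
  and dH: "\<And>r. r \<in> {0..u} \<Longrightarrow> (H has_real_derivative h r) (at r within {0..u})"
  and hb: "\<And>r. r \<in> {0..u} \<Longrightarrow> exp (\<rho> u - \<rho> r) * cmod (b r) \<le> h r"
  shows "cmod (D u) \<le> exp (\<rho> u - \<rho> 0) * cmod (D 0) + (H u - H 0)"
proof -
  define A where "A r = integral {0..r} a" for r
  have dA: "(A has_vector_derivative a r) (at r within {0..u})" if "r \<in> {0..u}" for r
    unfolding A_def by (rule integral_has_vector_derivative[OF ca that])
  have A0: "A 0 = 0" by (simp add: A_def)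
  have mono: "Re (A u) - \<rho> u \<le> Re (A r) - \<rho> r" if r: "r \<in> {0..u}" for r
  proof (rule mono_within[where \<psi> = "\<lambda>t. Re (A t) - \<rho> t" and \<psi>' = "\<lambda>t. Re (a t) - \<rho>' t"])
    show "r \<le> u" using r by auto
    fix t assume t: "t \<in> {r..u}"
    then have t': "t \<in> {0..u}" using r by auto
    have sub: "{r..u} \<subseteq> {0..u}" using r by auto
    show "((\<lambda>t. Re (A t) - \<rho> t) has_real_derivative Re (a t) - \<rho>' t) (at t within {r..u})"
      by (rule DERIV_subset[OF _ sub], rule DERIV_diff[OF vd_Re[OF dA[OF t']] d\<rho>[OF t']])
    show "Re (a t) - \<rho>' t \<le> 0" using ra[OF t'] by simp
  qed
  define F where "F r = exp (A u - A r) * D r" for r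
  have dF: "(F has_vector_derivative exp (A u - A r) * b r) (at r within {0..u})"
    if r: "r \<in> {0..u}" for r
  proof -
    have e: "((\<lambda>r. exp (A u - A r)) has_vector_derivative (- a r) * exp (A u - A r)) (at r within {0..u})"
      using vd_exp[OF has_vector_derivative_diff[OF has_vector_derivative_const dA[OF r]]] by simp
    have "(F has_vector_derivative (exp (A u - A r) * (a r * D r + b r) + (- a r) * exp (A u - A r) * D r)) (at r within {0..u})"
      unfolding F_def by (rule has_vector_derivative_mult[OF e dD[OF r]])
    moreover have "exp (A u - A r) * (a r * D r + b r) + (- a r) * exp (A u - A r) * D r = exp (A u - A r) * b r"
      by (simp add: algebra_simps)
    ultimately show ?thesis by simp
  qed
  have "cmod (F u - F 0) \<le> H u - H 0"
  proof (rule bound_within[OF u dF dH])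
    fix r assume r: "r \<in> {0..u}"
    have "cmod (exp (A u - A r) * b r) = exp (Re (A u) - Re (A r)) * cmod (b r)"
      by (simp add: norm_mult norm_exp_eq_Re)
    also have "\<dots> \<le> exp (\<rho> u - \<rho> r) * cmod (b r)"
      using mono[OF r] by (intro mult_right_mono) auto
    also have "\<dots> \<le> h r" by (rule hb[OF r])
    finally show "cmod (exp (A u - A r) * b r) \<le> h r" .
  qed
  moreover have "F u = D u" by (simp add: F_def)
  moreover have "F 0 = exp (A u) * D 0" by (simp add: F_def A0)
  moreover have "cmod (exp (A u) * D 0) \<le> exp (\<rho> u - \<rho> 0) * cmod (D 0)"
  proof -
    have "Re (A u) \<le> \<rho> u - \<rho> 0" using mono[of 0] u A0 by auto
    then show ?thesis by (simp add: norm_mult norm_exp_eq_Re mult_right_mono)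
  qed
  ultimately show ?thesis using norm_triangle_ineq2[of "F u" "F 0"] by simp
qed



lemma LL2:
  fixes D a b :: "real \<Rightarrow> complex"
  assumes u: "0 \<le> u" "u \<le> T'"
  and c: "0 < c" and \<kappa>: "0 < \<kappa>" and K: "0 \<le> K"
  and B: "0 \<le> B1" "0 \<le> B2" "0 \<le> B3"
  and dD: "\<And>r. r \<in> {0..u} \<Longrightarrow> (D has_vector_derivative (a r * D r + b r)) (at r within {0..u})"
  and ca: "continuous_on {0..u} a"
  and ra: "\<And>r. r \<in> {0..u} \<Longrightarrow> Re (a r) \<le> K - \<kappa> / (r + c)"
  and bb: "\<And>r. r \<in> {0..u} \<Longrightarrow> cmod (b r) \<le> B1 / (r + c) + B2 / sqrt (r + c) + B3"
  shows "cmod (D u) \<le> exp (K * T') * (cmod (D 0) + B1 / \<kappa> + 2 * B2 * sqrt (T' + c) + B3 * T')"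
proof -
  define \<rho> where "\<rho> r = K * r - \<kappa> * ln (r + c)" for r
  define E where "E = exp (K * T')"
  define h where "h r = E * (B1 * (r + c) powr (\<kappa> - 1) / (u + c) powr \<kappa> + B2 / sqrt (r + c) + B3)" for r
  define H where "H r = E * (B1 * (r + c) powr \<kappa> / (\<kappa> * (u + c) powr \<kappa>) + 2 * B2 * sqrt (r + c) + B3 * r)" for r
  have Epos: "0 < E" by (simp add: E_def)
  have d\<rho>: "(\<rho> has_real_derivative (K - \<kappa> / (r + c))) (at r within {0..u})" if "r \<in> {0..u}" for r
  proof -
    have "r + c > 0" using that c by auto
    have l: "((\<lambda>r. ln (r + c)) has_real_derivative 1 / (r + c)) (at r)"
      using DERIV_chain2[OF DERIV_ln_divide[OF \<open>r + c > 0\<close>] DERIV_add[OF DERIV_ident DERIV_const]] by simp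
    have "(\<rho> has_real_derivative (K * 1 - \<kappa> * (1 / (r + c)))) (at r)"
      unfolding \<rho>_def by (rule DERIV_diff[OF DERIV_cmult[OF DERIV_ident] DERIV_cmult[OF l]])
    then have "(\<rho> has_real_derivative (K - \<kappa> / (r + c))) (at r)" by simp
    then show ?thesis by (rule has_field_derivative_at_within)
  qed
  have dH: "(H has_real_derivative h r) (at r within {0..u})" if "r \<in> {0..u}" for r
  proof -
    have rc: "r + c > 0" using that c by auto
    have p: "((\<lambda>r. (r + c) powr \<kappa>) has_real_derivative \<kappa> * (r + c) powr (\<kappa> - 1)) (at r)"
      using DERIV_chain2[OF has_real_derivative_powr[OF rc] DERIV_add[OF DERIV_ident DERIV_const]] by simp
    have q: "((\<lambda>r. sqrt (r + c)) has_real_derivative inverse (sqrt (r + c)) / 2) (at r)"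
      using DERIV_chain2[OF DERIV_real_sqrt[OF rc] DERIV_add[OF DERIV_ident DERIV_const]] by simp
    have "(H has_real_derivative E * (B1 * (\<kappa> * (r + c) powr (\<kappa> - 1)) / (\<kappa> * (u + c) powr \<kappa>)
        + 2 * B2 * (inverse (sqrt (r + c)) / 2) + B3 * 1)) (at r)"
      unfolding H_def
      by (rule DERIV_cmult[OF DERIV_add[OF DERIV_add[OF DERIV_cdivide[OF DERIV_cmult[OF p]] DERIV_cmult[OF q]] DERIV_cmult[OF DERIV_ident]]])
    moreover have "E * (B1 * (\<kappa> * (r + c) powr (\<kappa> - 1)) / (\<kappa> * (u + c) powr \<kappa>)
        + 2 * B2 * (inverse (sqrt (r + c)) / 2) + B3 * 1) = h r"
      unfolding h_def using \<kappa> by (simp add: divide_simps)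
    ultimately have "(H has_real_derivative h r) (at r)" by simp
    then show ?thesis by (rule has_field_derivative_at_within)
  qed
  have main: "cmod (D u) \<le> exp (\<rho> u - \<rho> 0) * cmod (D 0) + (H u - H 0)"
  proof (rule LL[OF u(1) dD ca d\<rho> _ dH])
    fix r assume r: "r \<in> {0..u}"
    show "Re (a r) \<le> K - \<kappa> / (r + c)" by (rule ra[OF r])
    have rc: "r + c > 0" "u + c > 0" "r + c \<le> u + c" using r c by auto
    have e1: "exp (\<rho> u - \<rho> r) = exp (K * (u - r)) * ((r + c) powr \<kappa> / (u + c) powr \<kappa>)"
      using rc by (simp add: \<rho>_def powr_def exp_diff[symmetric] exp_add[symmetric] algebra_simps)
    have e2: "exp (K * (u - r)) \<le> E"
      unfolding E_def using r u K by (auto intro!: mult_left_mono)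
    have e3: "(r + c) powr \<kappa> / (u + c) powr \<kappa> \<le> 1"
      using rc \<kappa> by (simp add: powr_mono2)
    have e3': "0 \<le> (r + c) powr \<kappa> / (u + c) powr \<kappa>" by simp
    have "exp (\<rho> u - \<rho> r) * cmod (b r) \<le> exp (\<rho> u - \<rho> r) * (B1 / (r + c) + B2 / sqrt (r + c) + B3)"
      by (rule mult_left_mono[OF bb[OF r]]) simp
    also have "\<dots> = exp (K * (u - r)) * (B1 * ((r + c) powr \<kappa> / (u + c) powr \<kappa> / (r + c))
        + ((r + c) powr \<kappa> / (u + c) powr \<kappa>) * (B2 / sqrt (r + c) + B3))"
    proof -
      define P where "P = (r + c) powr \<kappa> / (u + c) powr \<kappa>"
      show ?thesis unfolding e1 P_def[symmetric] by (simp add: algebra_simps)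
    qed
    also have "\<dots> \<le> E * (B1 * ((r + c) powr \<kappa> / (u + c) powr \<kappa> / (r + c)) + 1 * (B2 / sqrt (r + c) + B3))"
      using e2 e3 e3' B rc Epos
      by (intro mult_mono add_mono mult_left_mono mult_right_mono) (auto intro!: divide_nonneg_nonneg)
    also have "(r + c) powr \<kappa> / (u + c) powr \<kappa> / (r + c) = (r + c) powr (\<kappa> - 1) / (u + c) powr \<kappa>"
      using rc by (simp add: powr_diff)
    finally show "exp (\<rho> u - \<rho> r) * cmod (b r) \<le> h r" unfolding h_def by (simp add: algebra_simps)
  qed
  have uc: "u + c > 0" "0 < c" using u c by auto
  have "\<rho> u - \<rho> 0 \<le> K * T'"
  proof -
    have "ln c \<le> ln (u + c)" using uc u by simp
    then have "\<rho> u - \<rho> 0 \<le> K * u" unfolding \<rho>_def using \<kappa> by (simp add: algebra_simps mult_left_mono)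
    also have "\<dots> \<le> K * T'" using u K by (simp add: mult_left_mono)
    finally show ?thesis .
  qed
  then have ex: "exp (\<rho> u - \<rho> 0) * cmod (D 0) \<le> E * cmod (D 0)"
    unfolding E_def by (intro mult_right_mono) auto
  have "H u - H 0 \<le> E * (B1 / \<kappa> + 2 * B2 * sqrt (T' + c) + B3 * T')"
  proof -
    have "H u - H 0 = E * (B1 / \<kappa> - B1 * c powr \<kappa> / (\<kappa> * (u + c) powr \<kappa>)
       + 2 * B2 * (sqrt (u + c) - sqrt c) + B3 * u)"
      unfolding H_def using uc \<kappa> by (simp add: field_simps)
    also have "\<dots> \<le> E * (B1 / \<kappa> + 2 * B2 * sqrt (T' + c) + B3 * T')"
    proof (rule mult_left_mono, intro add_mono)
      show "B1 / \<kappa> - B1 * c powr \<kappa> / (\<kappa> * (u + c) powr \<kappa>) \<le> B1 / \<kappa>"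
        using B \<kappa> by (simp add: divide_nonneg_nonneg)
      have "sqrt (u + c) \<le> sqrt (T' + c)" using u by simp
      moreover have "0 \<le> sqrt c" using c by simp
      ultimately have "sqrt (u + c) - sqrt c \<le> sqrt (T' + c)" by linarith
      then show "2 * B2 * (sqrt (u + c) - sqrt c) \<le> 2 * B2 * sqrt (T' + c)"
        using B by (intro mult_left_mono) auto
      show "B3 * u \<le> B3 * T'" using B u by (simp add: mult_left_mono)
    qed (use Epos in auto)
    finally show ?thesis .
  qed
  with main ex show ?thesis unfolding E_def by (simp add: algebra_simps)
qed


lemma cmod_sq: "(cmod z)^2 = (Re z)^2 + (Im z)^2"
  by (simp add: norm_complex_def)

lemma Im_m2div: "Im (-2 / z) = 2 * Im z / (cmod z)^2"
  by (simp add: Im_divide cmod_sq)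

lemma Im_m2div': "Im (-2 / z + complex_of_real t) = 2 * Im z / (cmod z)^2"
proof -
  have "Im (-2 / z + complex_of_real t) = Im (-2 / z)" by simp
  also have "\<dots> = 2 * Im z / (cmod z)^2" by (rule Im_m2div)
  finally show ?thesis .
qed

lemma Re_m2div: "Re (-2 / z) = -2 * Re z / (cmod z)^2"
  by (simp add: Re_divide cmod_sq)

lemma mono_open:
  fixes \<phi> \<phi>' :: "real \<Rightarrow> real"
  assumes "0 \<le> a" "a \<le> b" "b \<le> s"
    and d: "\<And>x. x \<in> {0..s} \<Longrightarrow> (\<phi> has_real_derivative \<phi>' x) (at x within {0..s})"
    and n: "\<And>x. a < x \<Longrightarrow> x < b \<Longrightarrow> 0 \<le> \<phi>' x"
  shows "\<phi> a \<le> \<phi> b"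
proof (rule DERIV_nonneg_imp_increasing_open[OF assms(2)])
  have "continuous_on {0..s} \<phi>"
    unfolding continuous_on_eq_continuous_within using d DERIV_continuous by blast
  then show "continuous_on {a..b} \<phi>" by (rule continuous_on_subset) (use assms in auto)
  fix x assume x: "a < x" "x < b"
  then have x': "0 < x" "x < s" using assms by auto
  have "(\<phi> has_real_derivative \<phi>' x) (at x within {0<..<s})"
    by (rule DERIV_subset[OF d]) (use x' in auto)
  then have "(\<phi> has_real_derivative \<phi>' x) (at x)" using at_Icc_interior[OF x'] by simp
  then show "\<exists>y. (\<phi> has_real_derivative y) (at x) \<and> 0 \<le> y" using n[OF x] by auto
qed

lemma barrier:
  fixes \<phi> \<phi>' :: "real \<Rightarrow> real"
  assumes s: "0 \<le> s"
    and d: "\<And>x. x \<in> {0..s} \<Longrightarrow> (\<phi> has_real_derivative \<phi>' x) (at x within {0..s})"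
    and p: "0 < \<phi> 0"
    and n: "\<And>x. x \<in> {0..s} \<Longrightarrow> 0 < \<phi> x \<Longrightarrow> 0 \<le> \<phi>' x"
    and x1: "x1 \<in> {0..s}"
  shows "\<phi> 0 \<le> \<phi> x1"
proof (rule ccontr)
  assume "\<not> \<phi> 0 \<le> \<phi> x1"
  then have lt: "\<phi> x1 < \<phi> 0" by simp
  define \<theta> where "\<theta> = \<phi> 0 / 2"
  have th: "0 < \<theta>" "\<theta> < \<phi> 0" using p by (auto simp: \<theta>_def)
  have cont: "continuous_on {0..s} \<phi>"
    unfolding continuous_on_eq_continuous_within using d DERIV_continuous by blast
  define S where "S = {0..x1} \<inter> \<phi> -` {..\<theta>}"
  show False
  proof (cases "S = {}")
    case True
    then have "\<forall>t\<in>{0..x1}. \<theta> < \<phi> t" by (force simp: S_def)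
    have "\<phi> 0 \<le> \<phi> x1"
    proof (rule mono_open[OF order_refl _ _ d])
      show "0 \<le> x1" "x1 \<le> s" using x1 by auto
      fix x assume "0 < x" "x < x1"
      then have "\<theta> < \<phi> x" using \<open>\<forall>t\<in>{0..x1}. \<theta> < \<phi> t\<close> by auto
      then show "0 \<le> \<phi>' x" using n[of x] \<open>0 < x\<close> \<open>x < x1\<close> th x1 by auto
    qed
    then show False using lt by simp
  next
    case False
    have cl: "closed S" unfolding S_def
      by (rule continuous_closed_preimage[OF continuous_on_subset[OF cont]]) (use x1 in auto)
    have bdd: "bdd_below S" unfolding S_def by (auto intro: bdd_belowI[of _ 0])
    define t0 where "t0 = Inf S"
    have t0S: "t0 \<in> S" unfolding t0_def by (rule closed_contains_Inf[OF False bdd cl])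
    then have t0: "0 \<le> t0" "t0 \<le> x1" "\<phi> t0 \<le> \<theta>" by (auto simp: S_def)
    have above: "\<theta> < \<phi> t" if "0 \<le> t" "t < t0" for t
    proof (rule ccontr)
      assume "\<not> \<theta> < \<phi> t"
      then have "t \<in> S" using that t0 by (auto simp: S_def)
      then have "t0 \<le> t" unfolding t0_def by (rule cInf_lower[OF _ bdd])
      then show False using that by simp
    qed
    have "\<phi> 0 \<le> \<phi> t0"
    proof (rule mono_open[OF order_refl _ _ d])
      show "0 \<le> t0" "t0 \<le> s" using t0 x1 by auto
      fix x assume "0 < x" "x < t0"
      then have "\<theta> < \<phi> x" using above[of x] by auto
      then show "0 \<le> \<phi>' x" using n[of x] \<open>0 < x\<close> \<open>x < t0\<close> th t0 x1 by auto
    qed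
    then show False using t0 th by simp
  qed
qed

locale loew =
  fixes T M \<alpha> :: real and lam dlam :: "real \<Rightarrow> real" and \<epsilon> :: real
  assumes T: "0 < T" and M1: "1 \<le> M" and \<alpha>: "0 < \<alpha>" "\<alpha> \<le> 1"
  and lam_d: "\<And>t. t \<in> {0..T} \<Longrightarrow> (lam has_real_derivative dlam t) (at t within {0..T})"
  and dlam_c: "continuous_on {0..T} dlam"
  and dlam_b: "\<And>t. t \<in> {0..T} \<Longrightarrow> \<bar>dlam t\<bar> \<le> M"
  and dlam_h: "\<And>t s. t \<in> {0..T} \<Longrightarrow> s \<in> {0..T} \<Longrightarrow> \<bar>dlam t - dlam s\<bar> \<le> M * \<bar>t - s\<bar> powr \<alpha>"
  and \<epsilon>: "0 < \<epsilon>" "\<epsilon> \<le> 1"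
begin

lemma dlam_shift_cont:
  assumes "0 \<le> s" "s \<le> T"
  shows "continuous_on {0..s} (\<lambda>r. dlam (s - r))"
proof -
  have "continuous_on {0..s} (\<lambda>r. s - r)" by (intro continuous_intros)
  moreover have "(\<lambda>r. s - r) ` {0..s} \<subseteq> {0..T}" using assms by auto
  ultimately show ?thesis
    using continuous_on_compose2[OF dlam_c] by blast
qed

context
  fixes s g
  assumes s: "0 \<le> s" "s \<le> T" and sol: "is_sol dlam s \<epsilon> g"
begin

lemma g0: "g 0 = \<i> * complex_of_real \<epsilon>"
  using sol by (simp add: is_sol_def)

lemma gd: "r \<in> {0..s} \<Longrightarrow> (g has_vector_derivative (-2 / g r + complex_of_real (dlam (s - r)))) (at r within {0..s})"
  using sol by (simp add: is_sol_def)

lemma gcont: "continuous_on {0..s} g"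
  using gd by (rule continuous_on_vector_derivative)

lemma gIm: assumes "r \<in> {0..s}" shows "\<epsilon> \<le> Im (g r)"
proof -
  have "Im (g 0) \<le> Im (g r)"
  proof (rule barrier[OF s(1) _ _ _ assms])
    fix x assume x: "x \<in> {0..s}"
    show "((\<lambda>r. Im (g r)) has_real_derivative Im (-2 / g x + complex_of_real (dlam (s - x)))) (at x within {0..s})"
      by (rule vd_Im[OF gd[OF x]])
    assume "0 < Im (g x)"
    then show "0 \<le> Im (-2 / g x + complex_of_real (dlam (s - x)))"
      unfolding Im_m2div' by simp
  qed (simp add: g0 \<epsilon>)
  then show ?thesis by (simp add: g0)
qed

lemma gnz: "r \<in> {0..s} \<Longrightarrow> g r \<noteq> 0"
  using gIm[of r] \<epsilon> by auto

lemma gIm_mono: assumes "r \<in> {0..s}" "r' \<in> {0..s}" "r \<le> r'" shows "Im (g r) \<le> Im (g r')"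
proof -
  have "- Im (g r') \<le> - Im (g r)"
  proof (rule mono_within[where \<psi> = "\<lambda>x. - Im (g x)" and \<psi>' = "\<lambda>x. - Im (-2 / g x + complex_of_real (dlam (s - x)))"])
    show "r \<le> r'" by fact
    fix x assume x: "x \<in> {r..r'}"
    then have x': "x \<in> {0..s}" using assms by auto
    show "((\<lambda>x. - Im (g x)) has_real_derivative - Im (-2 / g x + complex_of_real (dlam (s - x)))) (at x within {r..r'})"
      by (rule DERIV_subset[OF DERIV_minus[OF vd_Im[OF gd[OF x']]]]) (use assms in auto)
    have "0 < Im (g x)" using gIm[OF x'] \<epsilon> by simp
    then show "- Im (-2 / g x + complex_of_real (dlam (s - x))) \<le> 0"
      unfolding Im_m2div' by simp
  qed
  then show ?thesis by simp
qed

lemma gRe: assumes r: "r \<in> {0..s}" shows "\<bar>Re (g r)\<bar> \<le> M * r"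
proof -
  define D where "D t = complex_of_real (Re (g t))" for t
  define a where "a t = complex_of_real (-2 / (cmod (g t))^2)" for t
  define b where "b t = complex_of_real (dlam (s - t))" for t
  have sub: "{0..r} \<subseteq> {0..s}" using r by auto
  have "cmod (D r) \<le> exp ((\<lambda>_. 0) r - (\<lambda>_. 0) 0) * cmod (D 0) + ((\<lambda>t. M * t) r - (\<lambda>t. M * t) 0)"
  proof (rule LL[where \<rho>' = "\<lambda>_. 0" and h = "\<lambda>_. M"])
    show "0 \<le> r" using r by auto
    fix t assume t: "t \<in> {0..r}"
    then have t': "t \<in> {0..s}" using sub by auto
    have eq: "Re (-2 / g t + complex_of_real (dlam (s - t))) = (-2 / (cmod (g t))^2) * Re (g t) + dlam (s - t)"
      by (simp add: Re_divide cmod_sq)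
    have "((\<lambda>t. Re (g t)) has_real_derivative Re (-2 / g t + complex_of_real (dlam (s - t)))) (at t within {0..r})"
      by (rule DERIV_subset[OF vd_Re[OF gd[OF t']] sub])
    then have "(D has_vector_derivative complex_of_real (Re (-2 / g t + complex_of_real (dlam (s - t))))) (at t within {0..r})"
      unfolding D_def by (rule has_vector_derivative_of_real)
    then show "(D has_vector_derivative a t * D t + b t) (at t within {0..r})"
      unfolding eq by (simp add: a_def b_def D_def)
    show "((\<lambda>_. 0) has_real_derivative 0) (at t within {0..r})" by (rule DERIV_const)
    show "Re (a t) \<le> 0" by (simp add: a_def)
    show "((\<lambda>t. M * t) has_real_derivative M) (at t within {0..r})"
      using DERIV_cmult[OF DERIV_ident, of M] by simp
    have "s - t \<in> {0..T}" using t' s by auto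
    then show "exp (0 - 0) * cmod (b t) \<le> M" using dlam_b[of "s - t"] by (simp add: b_def)
  next
    have "continuous_on {0..r} g" by (rule continuous_on_subset[OF gcont sub])
    moreover have "\<forall>t\<in>{0..r}. cmod (g t) \<noteq> 0" using gnz sub by auto
    ultimately show "continuous_on {0..r} a" unfolding a_def
      by (intro continuous_intros) auto
  qed
  then show ?thesis using r by (simp add: D_def g0)
qed

lemma gIm_up: assumes r: "r \<in> {0..s}" shows "Im (g r)^2 \<le> \<epsilon>^2 + 4 * r"
proof -
  have sub: "{0..r} \<subseteq> {0..s}" using r by auto
  have "(\<lambda>t. Im (g t) * Im (g t) - 4 * t) r \<le> (\<lambda>t. Im (g t) * Im (g t) - 4 * t) 0"
  proof (rule mono_within[where \<psi> = "\<lambda>t. Im (g t) * Im (g t) - 4 * t" and \<psi>' = "\<lambda>t. Im (g t) * (2 * Im (g t) / (cmod (g t))^2) + (2 * Im (g t) / (cmod (g t))^2) * Im (g t) - 4 * 1"])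
    show "0 \<le> r" using r by auto
    fix t assume t: "t \<in> {0..r}"
    then have t': "t \<in> {0..s}" using sub by auto
    have d: "((\<lambda>t. Im (g t)) has_real_derivative 2 * Im (g t) / (cmod (g t))^2) (at t within {0..r})"
      using DERIV_subset[OF vd_Im[OF gd[OF t']] sub] unfolding Im_m2div' .
    show "((\<lambda>t. Im (g t) * Im (g t) - 4 * t) has_real_derivative
       Im (g t) * (2 * Im (g t) / (cmod (g t))^2) + (2 * Im (g t) / (cmod (g t))^2) * Im (g t) - 4 * 1) (at t within {0..r})"
      by (rule DERIV_diff[OF DERIV_mult'[OF d d] DERIV_cmult[OF DERIV_ident]])
    have nz: "(cmod (g t))^2 > 0" using gnz[OF t'] by simp
    have "Im (g t)^2 \<le> (cmod (g t))^2" by (simp add: cmod_sq)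
    then have "4 * Im (g t)^2 / (cmod (g t))^2 \<le> 4" using nz by (simp add: divide_le_eq)
    then show "Im (g t) * (2 * Im (g t) / (cmod (g t))^2) + (2 * Im (g t) / (cmod (g t))^2) * Im (g t) - 4 * 1 \<le> 0"
      by (simp add: power2_eq_square algebra_simps)
  qed
  then show ?thesis by (simp add: g0 power2_eq_square)
qed

lemma gIm_low1: assumes r: "r \<in> {0..s}" "r \<le> 1 / M^2" shows "r \<le> Im (g r)^2"
proof -
  have sub: "{0..r} \<subseteq> {0..s}" using r by auto
  define a where "a t = 3 / (cmod (g t))^2" for t
  define A where "A t = integral {0..t} a" for t
  define q where "q t = Im (g t) * Im (g t) - t" for t
  have ca: "continuous_on {0..r} a"
  proof -
    have "continuous_on {0..r} g" by (rule continuous_on_subset[OF gcont sub])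
    moreover have "\<forall>t\<in>{0..r}. cmod (g t) \<noteq> 0" using gnz sub by auto
    ultimately show ?thesis unfolding a_def by (intro continuous_intros) auto
  qed
  have dA: "(A has_real_derivative a t) (at t within {0..r})" if "t \<in> {0..r}" for t
    unfolding A_def has_real_derivative_iff_has_vector_derivative
    by (rule integral_has_vector_derivative[OF ca that])
  have "(\<lambda>t. - (exp (- A t) * q t)) r \<le> (\<lambda>t. - (exp (- A t) * q t)) 0"
  proof (rule mono_within[where \<psi> = "\<lambda>t. - (exp (- A t) * q t)" and \<psi>' = "\<lambda>t. - (exp (- A t) * (Im (g t) * (2 * Im (g t) / (cmod (g t))^2) + (2 * Im (g t) / (cmod (g t))^2) * Im (g t) - 1) + exp (- A t) * (- a t) * q t)"])
    show "0 \<le> r" using r by auto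
    fix t assume t: "t \<in> {0..r}"
    then have t': "t \<in> {0..s}" using sub by auto
    have d: "((\<lambda>t. Im (g t)) has_real_derivative 2 * Im (g t) / (cmod (g t))^2) (at t within {0..r})"
      using DERIV_subset[OF vd_Im[OF gd[OF t']] sub] unfolding Im_m2div' .
    have dq: "(q has_real_derivative Im (g t) * (2 * Im (g t) / (cmod (g t))^2) + (2 * Im (g t) / (cmod (g t))^2) * Im (g t) - 1) (at t within {0..r})"
      unfolding q_def by (rule DERIV_diff[OF DERIV_mult'[OF d d] DERIV_ident])
    have de: "((\<lambda>t. exp (- A t)) has_real_derivative exp (- A t) * (- a t)) (at t within {0..r})"
      by (rule DERIV_chain2[OF DERIV_exp DERIV_minus[OF dA[OF t]], unfolded o_def])
    show "((\<lambda>t. - (exp (- A t) * q t)) has_real_derivative - (exp (- A t) * (Im (g t) * (2 * Im (g t) / (cmod (g t))^2) + (2 * Im (g t) / (cmod (g t))^2) * Im (g t) - 1) + exp (- A t) * (- a t) * q t)) (at t within {0..r})"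
      by (rule DERIV_minus[OF DERIV_mult'[OF de dq]])
    define x where "x = Re (g t)"
    define y where "y = Im (g t)"
    define N where "N = (cmod (g t))^2"
    have N: "N = x^2 + y^2" by (simp add: N_def x_def y_def cmod_sq)
    have Npos: "0 < N" using gnz[OF t'] by (simp add: N_def)
    have xb: "\<bar>x\<bar> \<le> M * t" unfolding x_def by (rule gRe[OF t'])
    have tt: "0 \<le> t" "t \<le> 1 / M^2" using t r by auto
    have M2: "M^2 * t \<le> 1" using tt M1 by (simp add: field_simps)
    have "x^2 \<le> (M * t)^2" using power_mono[OF xb abs_ge_zero, of 2] by simp
    also have "\<dots> = (M^2 * t) * t" by (simp add: power2_eq_square)
    also have "\<dots> \<le> 1 * t" using M2 tt by (intro mult_right_mono) auto
    finally have x2: "x^2 \<le> t" by simp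
    have key: "0 \<le> - a t * q t + (y * (2 * y / N) + (2 * y / N) * y - 1)"
    proof -
      have e1: "y * (2 * y / N) + (2 * y / N) * y - 1 = (4 * y^2 - N) / N"
        using Npos by (simp add: field_simps power2_eq_square)
      have e2: "- a t * q t = (- 3 * (y^2 - t)) / N"
        unfolding a_def q_def N_def y_def using gnz[OF t'] by (simp add: power2_eq_square field_simps)
      have e3: "(- 3 * (y^2 - t)) / N + (4 * y^2 - N) / N = (- 3 * (y^2 - t) + (4 * y^2 - N)) / N"
        by (rule add_divide_distrib[symmetric])
      have e4: "- 3 * (y^2 - t) + (4 * y^2 - N) = 3 * t - x^2" by (simp add: N)
      have "- a t * q t + (y * (2 * y / N) + (2 * y / N) * y - 1) = (3 * t - x^2) / N"
        unfolding e1 e2 e3 e4 ..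
      also have "\<dots> \<ge> 0" using x2 Npos tt by simp
      finally show ?thesis .
    qed
    have "0 \<le> exp (- A t) * (- a t * q t + (y * (2 * y / N) + (2 * y / N) * y - 1))"
      using key by simp
    then show "- (exp (- A t) * (Im (g t) * (2 * Im (g t) / (cmod (g t))^2) + (2 * Im (g t) / (cmod (g t))^2) * Im (g t) - 1) + exp (- A t) * (- a t) * q t) \<le> 0"
      unfolding y_def N_def by (simp add: algebra_simps)
  qed
  then have "exp (- A 0) * q 0 \<le> exp (- A r) * q r" by simp
  moreover have "q 0 = \<epsilon>^2" by (simp add: q_def g0 power2_eq_square)
  moreover have "A 0 = 0" by (simp add: A_def)
  ultimately have "0 \<le> exp (- A r) * q r" using \<epsilon> by (smt (verit) exp_gt_zero zero_le_power2 mult_nonneg_nonneg exp_zero)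
  then have "0 \<le> q r" by (simp add: zero_le_mult_iff)
  then show ?thesis by (simp add: q_def power2_eq_square)
qed

lemma gIm_low: assumes r: "r \<in> {0..s}" shows "min r (1 / M^2) \<le> Im (g r)^2"
proof (cases "r \<le> 1 / M^2")
  case True
  then show ?thesis using gIm_low1[OF r True] by simp
next
  case False
  define r1 where "r1 = 1 / M^2"
  have r1: "r1 \<in> {0..s}" "r1 \<le> r" using False r by (auto simp: r1_def)
  have "r1 \<le> Im (g r1)^2" using gIm_low1[OF r1(1)] by (simp add: r1_def)
  also have "\<dots> \<le> Im (g r)^2"
    using gIm_mono[OF r1(1) r r1(2)] gIm[OF r1(1)] \<epsilon> by (intro power_mono) auto
  finally show ?thesis using False by (simp add: r1_def)
qed

end
end

context loew begin

lemma sol_unique: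
  assumes s: "0 \<le> s" "s \<le> T" and g1: "is_sol dlam s \<epsilon> g1" and g2: "is_sol dlam s \<epsilon> g2"
    and r: "r \<in> {0..s}"
  shows "g1 r = g2 r"
proof -
  define D where "D t = g1 t - g2 t" for t
  define a where "a t = 2 / (g1 t * g2 t)" for t
  have sub: "{0..r} \<subseteq> {0..s}" using r by auto
  have "cmod (D r) \<le> exp ((\<lambda>t. 2 / \<epsilon>^2 * t) r - (\<lambda>t. 2 / \<epsilon>^2 * t) 0) * cmod (D 0) + ((\<lambda>_. 0) r - (\<lambda>_. 0) 0)"
  proof (rule LL[where b = "\<lambda>_. 0" and \<rho>' = "\<lambda>_. 2 / \<epsilon>^2" and h = "\<lambda>_. 0"])
    show "0 \<le> r" using r by auto
    fix t assume t: "t \<in> {0..r}"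
    then have t': "t \<in> {0..s}" using sub by auto
    have nz: "g1 t \<noteq> 0" "g2 t \<noteq> 0" using gnz[OF s g1 t'] gnz[OF s g2 t'] by auto
    have "(D has_vector_derivative (-2 / g1 t + complex_of_real (dlam (s - t))) - (-2 / g2 t + complex_of_real (dlam (s - t)))) (at t within {0..r})"
      unfolding D_def
      by (rule has_vector_derivative_within_subset[OF has_vector_derivative_diff[OF gd[OF s g1 t'] gd[OF s g2 t']] sub])
    moreover have "(-2 / g1 t + complex_of_real (dlam (s - t))) - (-2 / g2 t + complex_of_real (dlam (s - t))) = a t * D t + 0"
      using nz by (simp add: a_def D_def field_simps)
    ultimately show "(D has_vector_derivative a t * D t + 0) (at t within {0..r})" by simp
    show "((\<lambda>t. 2 / \<epsilon>^2 * t) has_real_derivative 2 / \<epsilon>^2) (at t within {0..r})"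
      using DERIV_cmult[OF DERIV_ident, of "2 / \<epsilon>^2"] by simp
    have i1: "\<epsilon> \<le> cmod (g1 t)" using gIm[OF s g1 t'] abs_Im_le_cmod[of "g1 t"] by linarith
    have i2: "\<epsilon> \<le> cmod (g2 t)" using gIm[OF s g2 t'] abs_Im_le_cmod[of "g2 t"] by linarith
    have h1: "\<epsilon> * \<epsilon> \<le> cmod (g1 t) * cmod (g2 t)" using i1 i2 \<epsilon> by (intro mult_mono) auto
    have h2: "0 < (cmod (g1 t) * cmod (g2 t)) * (\<epsilon> * \<epsilon>)"
      using nz \<epsilon> by (intro mult_pos_pos) auto
    have "2 / (cmod (g1 t) * cmod (g2 t)) \<le> 2 / (\<epsilon> * \<epsilon>)"
      by (rule divide_left_mono[OF h1 _ h2]) simp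
    moreover have "Re (a t) \<le> cmod (a t)" by (rule complex_Re_le_cmod)
    moreover have "cmod (a t) = 2 / (cmod (g1 t) * cmod (g2 t))" by (simp add: a_def norm_divide norm_mult)
    ultimately show "Re (a t) \<le> 2 / \<epsilon>^2" by (simp add: power2_eq_square)
    show "((\<lambda>_. 0) has_real_derivative 0) (at t within {0..r})" by (rule DERIV_const)
    show "exp (2 / \<epsilon>\<^sup>2 * r - 2 / \<epsilon>\<^sup>2 * t) * cmod 0 \<le> 0" by simp
  next
    have "continuous_on {0..r} g1" by (rule continuous_on_subset[OF gcont[OF s g1] sub])
    moreover have "continuous_on {0..r} g2" by (rule continuous_on_subset[OF gcont[OF s g2] sub])
    moreover have "\<forall>t\<in>{0..r}. g1 t * g2 t \<noteq> 0" using gnz[OF s g1] gnz[OF s g2] sub by auto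
    ultimately show "continuous_on {0..r} a" unfolding a_def by (intro continuous_intros) auto
  qed
  moreover have "D 0 = 0" by (simp add: D_def g0[OF s g1] g0[OF s g2])
  ultimately show ?thesis by (simp add: D_def)
qed

lemma fsol_eq:
  assumes s: "0 \<le> s" "s \<le> T" and g: "is_sol dlam s \<epsilon> g" and u: "u \<in> {0..s}"
  shows "fsol dlam u s \<epsilon> = g u"
  unfolding fsol_def
proof (rule the_equality)
  show "\<exists>g'. is_sol dlam s \<epsilon> g' \<and> g' u = g u" using g by blast
  fix z assume "\<exists>g'. is_sol dlam s \<epsilon> g' \<and> g' u = z"
  then obtain g' where "is_sol dlam s \<epsilon> g'" "g' u = z" by blast
  then show "z = g u" using sol_unique[OF s _ g u] by metis
qed

end

context loew begin

lemma max_lip: "\<bar>max a e - max b e\<bar> \<le> \<bar>a - b\<bar>" for a b e :: real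
  by (simp add: max_def)

lemma sol_exists:
  assumes s: "0 \<le> s" "s \<le> T"
  shows "\<exists>g. is_sol dlam s \<epsilon> g"
proof -
  define L where "L = 2 / \<epsilon>^2"
  have L: "0 < L" using \<epsilon> by (simp add: L_def)
  define w where "w v = exp (2 * L * v)" for v :: real
  have wpos: "0 < w v" for v by (simp add: w_def)
  define tr where "tr z = complex_of_real (Re z) + \<i> * complex_of_real (max (Im z) \<epsilon>)" for z
  have tr_Re: "Re (tr z) = Re z" and tr_Im: "Im (tr z) = max (Im z) \<epsilon>" for z by (simp_all add: tr_def)
  have tr_norm: "\<epsilon> \<le> cmod (tr z)" for z
    using abs_Im_le_cmod[of "tr z"] tr_Im[of z] by linarith
  have tr_nz: "tr z \<noteq> 0" for z using tr_norm[of z] \<epsilon> by auto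
  have tr_lip: "cmod (tr z1 - tr z2) \<le> cmod (z1 - z2)" for z1 z2
  proof -
    have "(cmod (tr z1 - tr z2))^2 = (Re z1 - Re z2)^2 + (max (Im z1) \<epsilon> - max (Im z2) \<epsilon>)^2"
      by (simp add: cmod_sq tr_Re tr_Im)
    also have "\<dots> \<le> (Re z1 - Re z2)^2 + (Im z1 - Im z2)^2"
      using power_mono[OF max_lip[of "Im z1" \<epsilon> "Im z2"] abs_ge_zero, of 2] by simp
    also have "\<dots> = (cmod (z1 - z2))^2" by (simp add: cmod_sq)
    finally show ?thesis by (rule power2_le_imp_le) simp
  qed
  have tr_cont: "continuous_on UNIV tr" unfolding tr_def by (intro continuous_intros)
  define Fn where "Fn v z = -2 / tr z + complex_of_real (dlam (s - v))" for v z
  have Fn_lip: "cmod (Fn v z1 - Fn v z2) \<le> L * cmod (z1 - z2)" for v z1 z2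
  proof -
    have "Fn v z1 - Fn v z2 = 2 * (tr z1 - tr z2) / (tr z1 * tr z2)"
      using tr_nz[of z1] tr_nz[of z2] by (simp add: Fn_def field_simps)
    then have "cmod (Fn v z1 - Fn v z2) = 2 * cmod (tr z1 - tr z2) / (cmod (tr z1) * cmod (tr z2))"
      by (simp only: norm_divide norm_mult) simp
    also have "\<dots> \<le> 2 * cmod (z1 - z2) / (\<epsilon> * \<epsilon>)"
    proof (rule frac_le)
      show "0 \<le> 2 * cmod (z1 - z2)" by simp
      show "2 * cmod (tr z1 - tr z2) \<le> 2 * cmod (z1 - z2)" using tr_lip[of z1 z2] by simp
      show "0 < \<epsilon> * \<epsilon>" using \<epsilon> by simp
      show "\<epsilon> * \<epsilon> \<le> cmod (tr z1) * cmod (tr z2)" using tr_norm[of z1] tr_norm[of z2] \<epsilon>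
        by (intro mult_mono) auto
    qed
    also have "\<dots> = L * cmod (z1 - z2)" by (simp add: L_def power2_eq_square)
    finally show ?thesis .
  qed
  define G where "G h v = Fn v (complex_of_real (w v) * apply_bcontfun h v)" for h :: "real \<Rightarrow>\<^sub>C complex" and v
  have Gc: "continuous_on {0..s} (G h)" for h
  proof -
    have c1: "continuous_on {0..s} (\<lambda>v. complex_of_real (w v) * apply_bcontfun h v)"
      unfolding w_def by (intro continuous_intros) auto
    have c2: "continuous_on {0..s} (\<lambda>v. tr (complex_of_real (w v) * apply_bcontfun h v))"
      by (rule continuous_on_compose2[OF tr_cont c1]) auto
    have c3: "continuous_on {0..s} (\<lambda>v. complex_of_real (dlam (s - v)))"
      using dlam_shift_cont[OF s] by (intro continuous_intros)
    show ?thesis unfolding G_def Fn_def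
      using c2 c3 tr_nz by (intro continuous_intros) auto
  qed
  define I where "I h u = integral {0..u} (G h)" for h u
  have dI: "(I h has_vector_derivative G h u) (at u within {0..s})" if "u \<in> {0..s}" for h u
    unfolding I_def by (rule integral_has_vector_derivative[OF Gc that])
  have Ic: "continuous_on {0..s} (I h)" for h using dI by (rule continuous_on_vector_derivative)
  define \<phi> where "\<phi> h u = (\<i> * complex_of_real \<epsilon> + I h u) / complex_of_real (w u)" for h u
  have \<phi>c: "continuous_on {0..s} (\<phi> h)" for h
    unfolding \<phi>_def w_def using Ic[of h] by (intro continuous_intros) auto
  have cb: "cbox 0 s = {0..s}" by simp
  have ex: "\<exists>g::real \<Rightarrow>\<^sub>C complex. \<forall>u. apply_bcontfun g u = \<phi> h (clamp 0 s u)" for h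
  proof -
    obtain g :: "real \<Rightarrow>\<^sub>C complex" where "\<And>x. x \<in> cbox 0 s \<Longrightarrow> g x = \<phi> h x" "\<And>x. g x = \<phi> h (clamp 0 s x)"
      by (rule continuous_on_cbox_bcontfunE[of 0 s "\<phi> h"]) (use \<phi>c cb in auto)
    then show ?thesis by blast
  qed
  define \<Phi> where "\<Phi> h = (SOME g. \<forall>u. apply_bcontfun g u = \<phi> h (clamp 0 s u))" for h
  have \<Phi>: "apply_bcontfun (\<Phi> h) u = \<phi> h (clamp 0 s u)" for h u
    unfolding \<Phi>_def using someI_ex[OF ex[of h]] by blast
  have cl: "clamp 0 s u \<in> {0..s}" for u
    using clamp_in_interval[of 0 s u] s by simp
  have cl2: "u \<in> {0..s} \<Longrightarrow> clamp 0 s u = u" for u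
    using clamp_cancel_cbox[of u 0 s] by simp
  have contr: "dist (\<Phi> h1) (\<Phi> h2) \<le> 1/2 * dist h1 h2" for h1 h2
  proof (rule dist_bound)
    fix u
    define v0 where "v0 = clamp 0 s u"
    have v0: "v0 \<in> {0..s}" unfolding v0_def by (rule cl)
    define d where "d = dist h1 h2"
    have d: "0 \<le> d" by (simp add: d_def)
    have sub: "{0..v0} \<subseteq> {0..s}" using v0 by auto
    have bnd: "cmod ((I h1 v0 - I h2 v0) - (I h1 0 - I h2 0)) \<le> d * w v0 / 2 - d * w 0 / 2"
    proof (rule bound_within[where f' = "\<lambda>t. G h1 t - G h2 t" and \<phi>' = "\<lambda>t. d * L * w t"])
      show "0 \<le> v0" using v0 by auto
      fix t assume t: "t \<in> {0..v0}"
      then have t': "t \<in> {0..s}" using sub by auto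
      show "((\<lambda>t. I h1 t - I h2 t) has_vector_derivative G h1 t - G h2 t) (at t within {0..v0})"
        by (rule has_vector_derivative_within_subset[OF has_vector_derivative_diff[OF dI[OF t'] dI[OF t']] sub])
      have X: "((\<lambda>t. d * w t / 2) has_real_derivative d * (exp (2 * L * t) * (2 * L * 1)) / 2) (at t within {0..v0})"
        unfolding w_def
        by (rule DERIV_cdivide[OF DERIV_cmult[OF DERIV_chain2[OF DERIV_exp DERIV_cmult[OF DERIV_ident]]]])
      have e: "d * (exp (2 * L * t) * (2 * L * 1)) / 2 = d * L * w t" by (simp add: w_def)
      show "((\<lambda>t. d * w t / 2) has_real_derivative d * L * w t) (at t within {0..v0})"
        using X[unfolded e] .
      have "cmod (G h1 t - G h2 t) \<le> L * cmod (complex_of_real (w t) * apply_bcontfun h1 t - complex_of_real (w t) * apply_bcontfun h2 t)"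
        unfolding G_def by (rule Fn_lip)
      also have "\<dots> = L * w t * cmod (apply_bcontfun h1 t - apply_bcontfun h2 t)"
        using wpos[of t] by (simp add: right_diff_distrib[symmetric] norm_mult)
      also have "\<dots> \<le> L * w t * d"
        using dist_bounded[of h1 t h2] L wpos[of t] by (simp add: d_def dist_norm)
      finally show "cmod (G h1 t - G h2 t) \<le> d * L * w t" by (simp add: algebra_simps)
    qed
    have I0: "I h 0 = 0" for h by (simp add: I_def)
    have "dist (apply_bcontfun (\<Phi> h1) u) (apply_bcontfun (\<Phi> h2) u) = cmod (\<phi> h1 v0 - \<phi> h2 v0)"
      by (simp add: \<Phi> dist_norm v0_def)
    also have "\<phi> h1 v0 - \<phi> h2 v0 = (I h1 v0 - I h2 v0) / complex_of_real (w v0)"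
      unfolding \<phi>_def using wpos[of v0] by (simp add: field_simps)
    also have "cmod \<dots> = cmod (I h1 v0 - I h2 v0) / w v0"
      using wpos[of v0] by (simp add: norm_divide)
    also have "\<dots> \<le> (d * w v0 / 2 - d * w 0 / 2) / w v0"
      using bnd wpos[of v0] by (simp add: I0 divide_right_mono)
    also have "\<dots> \<le> 1/2 * d"
      using wpos[of v0] d by (simp add: w_def field_simps)
    finally show "dist (apply_bcontfun (\<Phi> h1) u) (apply_bcontfun (\<Phi> h2) u) \<le> 1/2 * dist h1 h2"
      by (simp add: d_def)
  qed
  obtain h where hfix: "\<Phi> h = h"
    using banach_fix_type[of "1/2" \<Phi>] contr by auto
  define g where "g u = \<i> * complex_of_real \<epsilon> + I h u" for u
  have gw: "complex_of_real (w u) * apply_bcontfun h u = g u" if u: "u \<in> {0..s}" for u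
  proof -
    have "apply_bcontfun h u = \<phi> h u" using \<Phi>[of h u] cl2[OF u] hfix by simp
    then show ?thesis using wpos[of u] by (simp add: \<phi>_def g_def)
  qed
  have dg: "(g has_vector_derivative Fn u (g u)) (at u within {0..s})" if u: "u \<in> {0..s}" for u
  proof -
    have "(g has_vector_derivative 0 + G h u) (at u within {0..s})"
      unfolding g_def by (rule has_vector_derivative_add[OF has_vector_derivative_const dI[OF u]])
    then show ?thesis using gw[OF u] by (simp add: G_def)
  qed
  have gIm: "\<epsilon> \<le> Im (g u)" if u: "u \<in> {0..s}" for u
  proof -
    have sub: "{0..u} \<subseteq> {0..s}" using u by auto
    have "(\<lambda>t. - Im (g t)) u \<le> (\<lambda>t. - Im (g t)) 0"
    proof (rule mono_within[where \<psi> = "\<lambda>t. - Im (g t)" and \<psi>' = "\<lambda>t. - Im (Fn t (g t))"])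
      show "0 \<le> u" using u by auto
      fix t assume t: "t \<in> {0..u}"
      then have t': "t \<in> {0..s}" using sub by auto
      show "((\<lambda>t. - Im (g t)) has_real_derivative - Im (Fn t (g t))) (at t within {0..u})"
        by (rule DERIV_subset[OF DERIV_minus[OF vd_Im[OF dg[OF t']]] sub])
      have "0 < Im (tr (g t))" using tr_Im[of "g t"] \<epsilon> by simp
      then show "- Im (Fn t (g t)) \<le> 0" unfolding Fn_def Im_m2div' by simp
    qed
    then show ?thesis by (simp add: g_def I_def)
  qed
  have tr_id: "tr (g u) = g u" if u: "u \<in> {0..s}" for u
    using gIm[OF u] by (simp add: complex_eq_iff tr_Re tr_Im)
  show ?thesis
  proof (rule exI[of _ g])
    show "is_sol dlam s \<epsilon> g" unfolding is_sol_def
    proof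
      show "g 0 = \<i> * complex_of_real \<epsilon>" by (simp add: g_def I_def)
      show "\<forall>u\<in>{0..s}. (g has_vector_derivative -2 / g u + complex_of_real (dlam (s - u))) (at u within {0..s})"
        using dg tr_id by (simp add: Fn_def)
    qed
  qed
qed

end

definition good :: "real \<Rightarrow> real \<Rightarrow> real \<Rightarrow> complex \<Rightarrow> bool" where
  "good M \<epsilon> r z \<longleftrightarrow> \<epsilon> \<le> Im z \<and> min r (1 / M^2) \<le> (Im z)^2 \<and> (Im z)^2 \<le> \<epsilon>^2 + 4 * r \<and> \<bar>Re z\<bar> \<le> M * r"

lemma sqrt_le_of_sq: "0 \<le> y \<Longrightarrow> a \<le> y^2 \<Longrightarrow> sqrt a \<le> y" for a y :: real
  using real_sqrt_le_mono[of a "y^2"] by simp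

lemma prod_lower:
  fixes y1 y2 a :: real
  assumes "0 \<le> y1" "0 \<le> y2" "a \<le> y1^2" "a \<le> y2^2" "0 \<le> a"
  shows "a \<le> y1 * y2"
proof -
  have "sqrt a \<le> y1" "sqrt a \<le> y2" using assms sqrt_le_of_sq by auto
  then have "sqrt a * sqrt a \<le> y1 * y2" using assms by (intro mult_mono) auto
  then show ?thesis using assms by simp
qed

lemma good_prod:
  fixes M T \<epsilon> r :: real
  assumes M: "1 \<le> M" and \<epsilon>: "0 < \<epsilon>" "\<epsilon> \<le> 1" and r: "0 \<le> r" "r \<le> T"
    and g1: "good M \<epsilon> r z1" and g2: "good M \<epsilon> r z2"
  shows "(r + \<epsilon>^2/4) / (2 + M^2 * (T + 1)) \<le> Im z1 * Im z2"
proof -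
  define y1 where "y1 = Im z1"
  define y2 where "y2 = Im z2"
  have y: "\<epsilon> \<le> y1" "\<epsilon> \<le> y2" "min r (1/M^2) \<le> y1^2" "min r (1/M^2) \<le> y2^2"
    using g1 g2 by (auto simp: good_def y1_def y2_def)
  have C: "2 \<le> 2 + M^2 * (T + 1)" using r by simp
  have Cpos: "0 < 2 + M^2 * (T + 1)" using r by (simp add: add_pos_nonneg)
  have ee: "\<epsilon>^2 \<le> y1 * y2" using y \<epsilon> by (simp add: power2_eq_square mult_mono)
  show ?thesis
  proof (cases "r \<le> 1 / M^2")
    case True
    then have "r \<le> y1 * y2" using y r \<epsilon> by (intro prod_lower) auto
    then have "(r + \<epsilon>^2/4) \<le> 2 * (y1 * y2)" using ee \<epsilon> zero_le_power2[of \<epsilon>] by linarith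
    then have "(r + \<epsilon>^2/4) / (2 + M^2 * (T + 1)) \<le> 2 * (y1 * y2) / (2 + M^2 * (T + 1))"
      using Cpos by (simp add: divide_right_mono)
    also have "\<dots> \<le> 2 * (y1 * y2) / 2"
      using C y \<epsilon> by (intro divide_left_mono) (auto intro!: mult_nonneg_nonneg)
    finally show ?thesis by (simp add: y1_def y2_def)
  next
    case False
    have Mp: "0 < M^2" using M by simp
    have "1 / M^2 \<le> y1 * y2" using y False Mp \<epsilon> by (intro prod_lower) auto
    moreover have "(r + \<epsilon>^2/4) / (2 + M^2 * (T + 1)) \<le> 1 / M^2"
    proof -
      have "r + \<epsilon>^2/4 \<le> T + 1" using r \<epsilon> power_le_one[of \<epsilon> 2] by simp
      also have "\<dots> \<le> (2 + M^2 * (T + 1)) / M^2" using Mp r by (simp add: field_simps)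
      finally show ?thesis using Mp Cpos by (simp add: field_simps)
    qed
    ultimately show ?thesis by (simp add: y1_def y2_def)
  qed
qed

lemma good_inv:
  fixes M T \<epsilon> r :: real
  assumes M: "1 \<le> M" and \<epsilon>: "0 < \<epsilon>" "\<epsilon> \<le> 1" and r: "0 \<le> r" "r \<le> T"
    and g1: "good M \<epsilon> r z1" and g2: "good M \<epsilon> r z2"
  shows "1 / (cmod z1 * cmod z2) \<le> (2 + M^2 * (T + 1)) / (r + \<epsilon>^2/4)"
proof -
  have p: "(r + \<epsilon>^2/4) / (2 + M^2 * (T + 1)) \<le> Im z1 * Im z2" by (rule good_prod[OF assms])
  have Cpos: "0 < 2 + M^2 * (T + 1)" using r by (simp add: add_pos_nonneg)
  have rc: "0 < r + \<epsilon>^2/4" using r \<epsilon> by (simp add: add_nonneg_pos)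
  have pos: "0 < (r + \<epsilon>^2/4) / (2 + M^2 * (T + 1))" using Cpos rc by simp
  have "Im z1 * Im z2 \<le> cmod z1 * cmod z2"
    using g1 g2 \<epsilon> abs_Im_le_cmod[of z1] abs_Im_le_cmod[of z2] by (intro mult_mono) (auto simp: good_def)
  with p have q: "(r + \<epsilon>^2/4) / (2 + M^2 * (T + 1)) \<le> cmod z1 * cmod z2" by linarith
  have cp: "0 < cmod z1 * cmod z2" using q pos by linarith
  have "1 / (cmod z1 * cmod z2) \<le> 1 / ((r + \<epsilon>^2/4) / (2 + M^2 * (T + 1)))"
    by (rule divide_left_mono[OF q]) (use mult_pos_pos[OF cp pos] in auto)
  then show ?thesis by simp
qed

lemma good_Re:
  fixes M T \<epsilon> r :: real
  assumes M: "1 \<le> M" and \<epsilon>: "0 < \<epsilon>" "\<epsilon> \<le> 1" and r: "0 \<le> r" "r \<le> T"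
    and g1: "good M \<epsilon> r z1" and g2: "good M \<epsilon> r z2"
  shows "Re (2 / (z1 * z2)) \<le> 16 * M^2 - (6/25) / (r + \<epsilon>^2/4)"
proof -
  define x1 where "x1 = Re z1"
  define x2 where "x2 = Re z2"
  define y1 where "y1 = Im z1"
  define y2 where "y2 = Im z2"
  have y: "\<epsilon> \<le> y1" "\<epsilon> \<le> y2" "min r (1/M^2) \<le> y1^2" "min r (1/M^2) \<le> y2^2"
     "y1^2 \<le> \<epsilon>^2 + 4 * r" "y2^2 \<le> \<epsilon>^2 + 4 * r" "\<bar>x1\<bar> \<le> M * r" "\<bar>x2\<bar> \<le> M * r"
    using g1 g2 by (auto simp: good_def x1_def x2_def y1_def y2_def)
  have Mp: "0 < M" "0 < M^2" using M by auto
  have rc: "0 < r + \<epsilon>^2/4" using r \<epsilon> by (simp add: add_nonneg_pos)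
  have nz: "z1 \<noteq> 0" "z2 \<noteq> 0" using y \<epsilon> by (auto simp: y1_def y2_def)
  have ReEq: "Re (2 / (z1 * z2)) = 2 * Re (z1 * z2) / (cmod (z1 * z2))^2"
    by (simp add: Re_divide cmod_sq)
  show ?thesis
  proof (cases "r \<le> 1 / (4 * M^2)")
    case True
    have rle: "r \<le> 1 / M^2" using True Mp by (simp add: field_simps)
    then have ry: "r \<le> y1^2" "r \<le> y2^2" using y by auto
    have M4: "M^2 * r \<le> 1/4" using True Mp by (simp add: field_simps)
    have xy: "\<bar>x1\<bar> \<le> y1 / 2" "\<bar>x2\<bar> \<le> y2 / 2"
    proof -
      have "(M * r)^2 = (M^2 * r) * r" by (simp add: power2_eq_square)
      also have "\<dots> \<le> (1/4) * r" using M4 r by (intro mult_right_mono) auto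
      finally have mr: "(M * r)^2 \<le> r / 4" by simp
      have A: "(M * r)^2 \<le> (y1 / 2)^2" using mr ry by (simp add: power_divide)
      have a: "M * r \<le> y1 / 2" by (rule power2_le_imp_le[OF A]) (use y \<epsilon> in auto)
      have B: "(M * r)^2 \<le> (y2 / 2)^2" using mr ry by (simp add: power_divide)
      have b: "M * r \<le> y2 / 2" by (rule power2_le_imp_le[OF B]) (use y \<epsilon> in auto)
      show "\<bar>x1\<bar> \<le> y1 / 2" using a y by linarith
      show "\<bar>x2\<bar> \<le> y2 / 2" using b y by linarith
    qed
    have ypos: "0 < y1" "0 < y2" using y \<epsilon> by auto
    define Y where "Y = y1 * y2"
    have Ypos: "0 < Y" using ypos by (simp add: Y_def)
    have "x1 * x2 \<le> \<bar>x1\<bar> * \<bar>x2\<bar>" by (simp add: abs_mult[symmetric])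
    also have "\<dots> \<le> (y1 / 2) * (y2 / 2)" using xy by (intro mult_mono) auto
    finally have "x1 * x2 \<le> Y / 4" by (simp add: Y_def)
    then have P: "Re (z1 * z2) \<le> - (3/4) * Y" by (simp add: x1_def x2_def y1_def y2_def Y_def)
    have "(cmod (z1 * z2))^2 = (x1^2 + y1^2) * (x2^2 + y2^2)"
      by (simp add: norm_mult power_mult_distrib cmod_sq x1_def x2_def y1_def y2_def)
    also have "\<dots> \<le> ((5/4) * y1^2) * ((5/4) * y2^2)"
    proof (intro mult_mono)
      have "x1^2 \<le> (y1/2)^2" using xy(1) power_mono[OF xy(1) abs_ge_zero, of 2] by simp
      then show "x1^2 + y1^2 \<le> (5/4) * y1^2" by (simp add: power_divide)
      have "x2^2 \<le> (y2/2)^2" using xy(2) power_mono[OF xy(2) abs_ge_zero, of 2] by simp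
      then show "x2^2 + y2^2 \<le> (5/4) * y2^2" by (simp add: power_divide)
    qed auto
    also have "\<dots> = (25/16) * Y^2" by (simp add: Y_def power_mult_distrib)
    finally have Q: "(cmod (z1 * z2))^2 \<le> (25/16) * Y^2" .
    have Qpos: "0 < (cmod (z1 * z2))^2" using nz by simp
    have "2 * Re (z1 * z2) / (cmod (z1 * z2))^2 \<le> 2 * (- (3/4) * Y) / (cmod (z1 * z2))^2"
      using P Qpos by (intro divide_right_mono) auto
    also have "\<dots> \<le> 2 * (- (3/4) * Y) / ((25/16) * Y^2)"
      using Q Qpos Ypos by (intro divide_left_mono_neg) (auto intro!: mult_pos_pos)
    also have "\<dots> = - (24/25) / Y" using Ypos by (simp add: field_simps power2_eq_square)
    also have "\<dots> \<le> - (24/25) / (4 * (r + \<epsilon>^2/4))"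
    proof -
      have "Y \<le> \<epsilon>^2 + 4 * r"
      proof -
        have "y1 \<le> sqrt (\<epsilon>^2 + 4 * r)" "y2 \<le> sqrt (\<epsilon>^2 + 4 * r)"
          using y ypos real_le_rsqrt by auto
        then have "Y \<le> sqrt (\<epsilon>^2 + 4 * r) * sqrt (\<epsilon>^2 + 4 * r)"
          unfolding Y_def using ypos r by (intro mult_mono) auto
        also have "\<dots> = \<epsilon>^2 + 4 * r" using r by simp
        finally show ?thesis .
      qed
      then have "Y \<le> 4 * (r + \<epsilon>^2/4)" by simp
      then show ?thesis using Ypos rc by (intro divide_left_mono_neg) (auto intro!: mult_pos_pos)
    qed
    also have "\<dots> = - (6/25) / (r + \<epsilon>^2/4)" using rc by (simp add: field_simps)
    also have "\<dots> \<le> 16 * M^2 - (6/25) / (r + \<epsilon>^2/4)" using Mp by simp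
    finally show ?thesis unfolding ReEq .
  next
    case False
    have m1: "1 / (4 * M^2) \<le> r" using False by simp
    have m2: "1 / (4 * M^2) \<le> 1 / M^2" using Mp by (simp add: field_simps)
    have "1 / (4 * M^2) \<le> min r (1 / M^2)" using m1 m2 by simp
    then have ry: "1 / (4 * M^2) \<le> y1^2" "1 / (4 * M^2) \<le> y2^2"
      using y by linarith+
    have Yl: "1 / (4 * M^2) \<le> y1 * y2" using ry y \<epsilon> Mp by (intro prod_lower) auto
    have "Re (2 / (z1 * z2)) \<le> cmod (2 / (z1 * z2))" by (rule complex_Re_le_cmod)
    also have "\<dots> = 2 / (cmod z1 * cmod z2)" by (simp add: norm_divide norm_mult)
    also have "\<dots> \<le> 2 / (y1 * y2)"
    proof (rule divide_left_mono)
      show "y1 * y2 \<le> cmod z1 * cmod z2" using abs_Im_le_cmod[of z1] abs_Im_le_cmod[of z2] y \<epsilon>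
        by (intro mult_mono) (auto simp: y1_def y2_def)
      show "0 < cmod z1 * cmod z2 * (y1 * y2)" using nz y \<epsilon> by (auto intro!: mult_pos_pos)
    qed simp
    also have "\<dots> \<le> 2 / (1 / (4 * M^2))"
    proof (rule divide_left_mono[OF Yl])
      have "0 < 1 / (4 * M^2)" using Mp by simp
      then have "0 < y1 * y2" using Yl by linarith
      then show "0 < y1 * y2 * (1 / (4 * M^2))" using Mp by simp
    qed simp
    also have "\<dots> = 8 * M^2" by simp
    finally have A: "Re (2 / (z1 * z2)) \<le> 8 * M^2" .
    have "(6/25) / (r + \<epsilon>^2/4) \<le> (6/25) / (1 / (4 * M^2))"
    proof (rule divide_left_mono)
      show "1 / (4 * M^2) \<le> r + \<epsilon>^2/4" using m1 zero_le_power2[of \<epsilon>] by linarith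
      show "0 < (r + \<epsilon>^2/4) * (1 / (4 * M^2))" using rc Mp by simp
    qed simp
    also have "\<dots> \<le> 8 * M^2" using Mp by simp
    finally show ?thesis using A by simp
  qed
qed


lemma bound_within_real:
  fixes f f' \<phi> \<phi>' :: "real \<Rightarrow> real"
  assumes "a \<le> b"
    and d: "\<And>x. x \<in> {a..b} \<Longrightarrow> (f has_real_derivative f' x) (at x within {a..b})"
    and p: "\<And>x. x \<in> {a..b} \<Longrightarrow> (\<phi> has_real_derivative \<phi>' x) (at x within {a..b})"
    and n: "\<And>x. x \<in> {a..b} \<Longrightarrow> \<bar>f' x\<bar> \<le> \<phi>' x"
  shows "\<bar>f b - f a\<bar> \<le> \<phi> b - \<phi> a"
proof -
  have "cmod ((\<lambda>x. complex_of_real (f x)) b - (\<lambda>x. complex_of_real (f x)) a) \<le> \<phi> b - \<phi> a"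
  proof (rule bound_within[OF assms(1) _ p])
    fix x assume x: "x \<in> {a..b}"
    show "((\<lambda>x. complex_of_real (f x)) has_vector_derivative complex_of_real (f' x)) (at x within {a..b})"
      by (rule has_vector_derivative_of_real[OF d[OF x]])
    show "cmod (complex_of_real (f' x)) \<le> \<phi>' x" using n[OF x] by simp
  qed simp
  then show ?thesis by (simp flip: of_real_diff)
qed

context loew begin

definition fs :: "real \<Rightarrow> real \<Rightarrow> complex" where
  "fs s = (SOME g. is_sol dlam s \<epsilon> g)"

lemma fs_sol: "0 \<le> s \<Longrightarrow> s \<le> T \<Longrightarrow> is_sol dlam s \<epsilon> (fs s)"
  unfolding fs_def using sol_exists by (rule someI_ex)

lemma fs_good: "0 \<le> s \<Longrightarrow> s \<le> T \<Longrightarrow> r \<in> {0..s} \<Longrightarrow> good M \<epsilon> r (fs s r)"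
  unfolding good_def using gIm[OF _ _ fs_sol] gIm_low[OF _ _ fs_sol] gIm_up[OF _ _ fs_sol] gRe[OF _ _ fs_sol]
  by auto

lemma lam_shift_d:
  assumes s: "0 \<le> s" "s \<le> T" and r: "r \<in> {0..s}"
  shows "((\<lambda>r. lam (s - r)) has_real_derivative - dlam (s - r)) (at r within {0..s})"
proof -
  have im: "(\<lambda>r. s - r) ` {0..s} \<subseteq> {0..T}" using s by auto
  have "(lam has_real_derivative dlam (s - r)) (at (s - r) within (\<lambda>r. s - r) ` {0..s})"
    by (rule DERIV_subset[OF lam_d im]) (use r s in auto)
  moreover have "((\<lambda>r. s - r) has_real_derivative -1) (at r within {0..s})"
    using DERIV_diff[OF DERIV_const DERIV_ident, of s r "{0..s}"] by simp
  ultimately have "((lam \<circ> (\<lambda>r. s - r)) has_real_derivative dlam (s - r) * -1) (at r within {0..s})"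
    by (rule DERIV_image_chain)
  then show ?thesis by (simp add: o_def)
qed

lemma lam_plus_d:
  assumes a: "0 \<le> a" "a + d \<le> T" "0 \<le> d" and t: "t \<in> {0..d}"
  shows "((\<lambda>t. lam (a + t)) has_real_derivative dlam (a + t)) (at t within {0..d})"
proof -
  have im: "(\<lambda>t. a + t) ` {0..d} \<subseteq> {0..T}" using a by auto
  have "(lam has_real_derivative dlam (a + t)) (at (a + t) within (\<lambda>t. a + t) ` {0..d})"
    by (rule DERIV_subset[OF lam_d im]) (use a t in auto)
  moreover have "((\<lambda>t. a + t) has_real_derivative 1) (at t within {0..d})"
    using DERIV_add[OF DERIV_const DERIV_ident, of a t "{0..d}"] by simp
  ultimately have "((lam \<circ> (\<lambda>t. a + t)) has_real_derivative dlam (a + t) * 1) (at t within {0..d})"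
    by (rule DERIV_image_chain)
  then show ?thesis by (simp add: o_def)
qed

definition G :: "real \<Rightarrow> real \<Rightarrow> complex" where
  "G s r = fs s r - complex_of_real (lam s) + complex_of_real (lam (s - r))"

lemma G_d:
  assumes s: "0 \<le> s" "s \<le> T" and r: "r \<in> {0..s}"
  shows "(G s has_vector_derivative -2 / fs s r) (at r within {0..s})"
proof -
  have "(G s has_vector_derivative (-2 / fs s r + complex_of_real (dlam (s - r))) - 0 + complex_of_real (- dlam (s - r))) (at r within {0..s})"
    unfolding G_def
    by (intro has_vector_derivative_add has_vector_derivative_diff gd[OF s fs_sol[OF s] r]
        has_vector_derivative_const has_vector_derivative_of_real lam_shift_d[OF s r])
  then show ?thesis by simp
qed

lemma G0: "0 \<le> s \<Longrightarrow> s \<le> T \<Longrightarrow> G s 0 = \<i> * complex_of_real \<epsilon>"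
  by (simp add: G_def g0[OF _ _ fs_sol])

lemma E_bound1:
  assumes "0 \<le> r" "r \<le> s" "0 \<le> \<delta>" "s + \<delta> \<le> T"
  shows "\<bar>lam (s + \<delta>) - lam (s + \<delta> - r) - lam s + lam (s - r)\<bar> \<le> M * \<delta> powr \<alpha> * r"
proof -
  have s: "0 \<le> s" "s \<le> T" "0 \<le> s + \<delta>" "s + \<delta> \<le> T" using assms by auto
  have "\<bar>(\<lambda>t. lam (s + \<delta> - t) - lam (s - t)) r - (\<lambda>t. lam (s + \<delta> - t) - lam (s - t)) 0\<bar>
      \<le> (\<lambda>t. M * \<delta> powr \<alpha> * t) r - (\<lambda>t. M * \<delta> powr \<alpha> * t) 0"
  proof (rule bound_within_real[where f' = "\<lambda>t. - dlam (s + \<delta> - t) - - dlam (s - t)" and \<phi>' = "\<lambda>_. M * \<delta> powr \<alpha>"])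
    show "0 \<le> r" by fact
    fix t assume t: "t \<in> {0..r}"
    have sub1: "{0..r} \<subseteq> {0..s + \<delta>}" and sub2: "{0..r} \<subseteq> {0..s}" using assms by auto
    show "((\<lambda>t. lam (s + \<delta> - t) - lam (s - t)) has_real_derivative - dlam (s + \<delta> - t) - - dlam (s - t)) (at t within {0..r})"
      by (rule DERIV_diff[OF DERIV_subset[OF lam_shift_d[OF s(3,4)] sub1] DERIV_subset[OF lam_shift_d[OF s(1,2)] sub2]])
         (use t assms in auto)
    show "((\<lambda>t. M * \<delta> powr \<alpha> * t) has_real_derivative M * \<delta> powr \<alpha>) (at t within {0..r})"
      using DERIV_cmult[OF DERIV_ident, of "M * \<delta> powr \<alpha>"] by simp
    have "\<bar>dlam (s + \<delta> - t) - dlam (s - t)\<bar> \<le> M * \<bar>(s + \<delta> - t) - (s - t)\<bar> powr \<alpha>"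
      by (rule dlam_h) (use t assms in auto)
    then show "\<bar>- dlam (s + \<delta> - t) - - dlam (s - t)\<bar> \<le> M * \<delta> powr \<alpha>" using assms by simp
  qed
  then show ?thesis by (simp add: algebra_simps)
qed

lemma E_bound2:
  assumes "0 \<le> r" "r \<le> s" "0 \<le> \<delta>" "s + \<delta> \<le> T"
  shows "\<bar>lam (s + \<delta>) - lam (s + \<delta> - r) - lam s + lam (s - r)\<bar> \<le> M * r powr \<alpha> * \<delta>"
proof -
  have "\<bar>(\<lambda>t. lam (s + t) - lam (s - r + t)) \<delta> - (\<lambda>t. lam (s + t) - lam (s - r + t)) 0\<bar>
      \<le> (\<lambda>t. M * r powr \<alpha> * t) \<delta> - (\<lambda>t. M * r powr \<alpha> * t) 0"
  proof (rule bound_within_real[where f' = "\<lambda>t. dlam (s + t) - dlam (s - r + t)" and \<phi>' = "\<lambda>_. M * r powr \<alpha>"])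
    show "0 \<le> \<delta>" by fact
    fix t assume t: "t \<in> {0..\<delta>}"
    show "((\<lambda>t. lam (s + t) - lam (s - r + t)) has_real_derivative dlam (s + t) - dlam (s - r + t)) (at t within {0..\<delta>})"
      by (rule DERIV_diff[OF lam_plus_d lam_plus_d]) (use t assms in auto)
    show "((\<lambda>t. M * r powr \<alpha> * t) has_real_derivative M * r powr \<alpha>) (at t within {0..\<delta>})"
      using DERIV_cmult[OF DERIV_ident, of "M * r powr \<alpha>"] by simp
    have "\<bar>dlam (s + t) - dlam (s - r + t)\<bar> \<le> M * \<bar>(s + t) - (s - r + t)\<bar> powr \<alpha>"
      by (rule dlam_h) (use t assms in auto)
    then show "\<bar>dlam (s + t) - dlam (s - r + t)\<bar> \<le> M * r powr \<alpha>" using assms by simp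
  qed
  then show ?thesis by (simp add: algebra_simps)
qed

end

context loew begin

definition "c0 = \<epsilon>^2 / 4"
definition "C2 = 2 + M^2 * (T + 1)"
definition "Kc = 16 * M^2"
definition "\<kappa>0 = (6::real) / 25"

lemma c0: "0 < c0" "c0 \<le> 1" using \<epsilon> power_le_one[of \<epsilon> 2] by (auto simp: c0_def)
lemma C2: "0 < C2" using T by (simp add: C2_def add_pos_nonneg)
lemma Kc: "0 \<le> Kc" by (simp add: Kc_def)
lemma \<kappa>0: "0 < \<kappa>0" by (simp add: \<kappa>0_def)

lemma a_bounds:
  assumes s1: "0 \<le> s1" "s1 \<le> T" and s2: "0 \<le> s2" "s2 \<le> T" and r: "0 \<le> r" "r \<le> s1" "r \<le> s2"
  shows "Re (2 / (fs s1 r * fs s2 r)) \<le> Kc - \<kappa>0 / (r + c0)"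
    and "cmod (2 / (fs s1 r * fs s2 r)) \<le> 2 * C2 / (r + c0)"
proof -
  have g1: "good M \<epsilon> r (fs s1 r)" by (rule fs_good[OF s1]) (use r in auto)
  have g2: "good M \<epsilon> r (fs s2 r)" by (rule fs_good[OF s2]) (use r in auto)
  have rT: "r \<le> T" using r s1 by auto
  show "Re (2 / (fs s1 r * fs s2 r)) \<le> Kc - \<kappa>0 / (r + c0)"
    using good_Re[OF M1 \<epsilon> r(1) rT g1 g2] by (simp add: Kc_def \<kappa>0_def c0_def)
  have "cmod (2 / (fs s1 r * fs s2 r)) = 2 * (1 / (cmod (fs s1 r) * cmod (fs s2 r)))"
    by (simp add: norm_divide norm_mult)
  also have "\<dots> \<le> 2 * (C2 / (r + c0))"
  proof -
    have "1 / (cmod (fs s1 r) * cmod (fs s2 r)) \<le> C2 / (r + c0)"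
      using good_inv[OF M1 \<epsilon> r(1) rT g1 g2] unfolding C2_def c0_def .
    then show ?thesis by simp
  qed
  finally show "cmod (2 / (fs s1 r * fs s2 r)) \<le> 2 * C2 / (r + c0)" by simp
qed

lemma fs_cont: "0 \<le> s \<Longrightarrow> s \<le> T \<Longrightarrow> continuous_on {0..s} (fs s)"
  using gcont[OF _ _ fs_sol] by blast

lemma fs_nz: "0 \<le> s \<Longrightarrow> s \<le> T \<Longrightarrow> r \<in> {0..s} \<Longrightarrow> fs s r \<noteq> 0"
  using gnz[OF _ _ fs_sol] by blast

lemma a_cont:
  assumes s1: "0 \<le> s1" "s1 \<le> T" and s2: "0 \<le> s2" "s2 \<le> T" and u: "u \<le> s1" "u \<le> s2"
  shows "continuous_on {0..u} (\<lambda>r. 2 / (fs s1 r * fs s2 r))"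
proof -
  have "continuous_on {0..u} (fs s1)" by (rule continuous_on_subset[OF fs_cont[OF s1]]) (use u in auto)
  moreover have "continuous_on {0..u} (fs s2)" by (rule continuous_on_subset[OF fs_cont[OF s2]]) (use u in auto)
  moreover have "\<forall>r\<in>{0..u}. fs s1 r * fs s2 r \<noteq> 0" using fs_nz[OF s1] fs_nz[OF s2] u by auto
  ultimately show ?thesis by (intro continuous_intros) auto
qed

definition "CA = exp (Kc * T) * 2 * C2 * M / \<kappa>0 + M"

lemma CA: "0 \<le> CA" using C2 \<kappa>0 M1 by (simp add: CA_def)

lemma first_bound:
  assumes u: "0 \<le> u" "u \<le> s" and \<delta>: "0 \<le> \<delta>" "s + \<delta> \<le> T"
  shows "cmod (fs (s + \<delta>) u - fs s u) \<le> CA * min (u * \<delta> powr \<alpha>) (\<delta> * u powr \<alpha>)"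
proof -
  have s1: "0 \<le> s + \<delta>" "s + \<delta> \<le> T" and s2: "0 \<le> s" "s \<le> T" using u \<delta> by auto
  define m where "m r = min (r * \<delta> powr \<alpha>) (\<delta> * r powr \<alpha>)" for r
  have m_mono: "m r \<le> m u" if "r \<in> {0..u}" for r
  proof -
    have "r * \<delta> powr \<alpha> \<le> u * \<delta> powr \<alpha>" using that by (intro mult_right_mono) auto
    moreover have "\<delta> * r powr \<alpha> \<le> \<delta> * u powr \<alpha>" using that \<alpha> \<delta> by (intro mult_left_mono powr_mono2) auto
    ultimately show ?thesis by (simp add: m_def min_def)
  qed
  define E where "E r = lam (s + \<delta>) - lam (s + \<delta> - r) - lam s + lam (s - r)" for r
  have Eb: "\<bar>E r\<bar> \<le> M * m r" if "r \<in> {0..u}" for r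
  proof -
    have "\<bar>E r\<bar> \<le> M * \<delta> powr \<alpha> * r" unfolding E_def by (rule E_bound1) (use that u \<delta> in auto)
    moreover have "\<bar>E r\<bar> \<le> M * r powr \<alpha> * \<delta>" unfolding E_def by (rule E_bound2) (use that u \<delta> in auto)
    ultimately show ?thesis by (simp add: m_def min_def algebra_simps)
  qed
  define D where "D r = G (s + \<delta>) r - G s r" for r
  define a where "a r = 2 / (fs (s + \<delta>) r * fs s r)" for r
  have fdiff: "fs (s + \<delta>) r - fs s r = D r + complex_of_real (E r)" for r
    by (simp add: D_def G_def E_def)
  have "cmod (D u) \<le> exp (Kc * T) * (cmod (D 0) + (2 * C2 * M * m u) / \<kappa>0 + 2 * 0 * sqrt (T + c0) + 0 * T)"
  proof (rule LL2[OF u(1) _ c0(1) \<kappa>0 Kc _ order_refl order_refl, where a = a and b = "\<lambda>r. a r * complex_of_real (E r)"])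
    show "u \<le> T" using u s2 by auto
    show "0 \<le> 2 * C2 * M * m u" using C2 M1 m_mono[of 0] u
      by (intro mult_nonneg_nonneg) (auto simp: m_def)
    fix r assume r: "r \<in> {0..u}"
    have r1: "r \<in> {0..s + \<delta>}" and r2: "r \<in> {0..s}" using r u \<delta> by auto
    have sub1: "{0..u} \<subseteq> {0..s + \<delta>}" and sub2: "{0..u} \<subseteq> {0..s}" using u \<delta> by auto
    have nz: "fs (s + \<delta>) r \<noteq> 0" "fs s r \<noteq> 0" using fs_nz[OF s1 r1] fs_nz[OF s2 r2] by auto
    have "(D has_vector_derivative -2 / fs (s + \<delta>) r - -2 / fs s r) (at r within {0..u})"
      unfolding D_def
      by (rule has_vector_derivative_diff[OF has_vector_derivative_within_subset[OF G_d[OF s1 r1] sub1]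
            has_vector_derivative_within_subset[OF G_d[OF s2 r2] sub2]])
    moreover have "-2 / fs (s + \<delta>) r - -2 / fs s r = a r * D r + a r * complex_of_real (E r)"
    proof -
      have "-2 / fs (s + \<delta>) r - -2 / fs s r = a r * (fs (s + \<delta>) r - fs s r)"
        using nz by (simp add: a_def field_simps)
      then show ?thesis unfolding fdiff by (simp add: algebra_simps)
    qed
    ultimately show "(D has_vector_derivative a r * D r + a r * complex_of_real (E r)) (at r within {0..u})" by simp
    show "Re (a r) \<le> Kc - \<kappa>0 / (r + c0)" unfolding a_def by (rule a_bounds(1)[OF s1 s2]) (use r u \<delta> in auto)
    have ab: "cmod (a r) \<le> 2 * C2 / (r + c0)" unfolding a_def by (rule a_bounds(2)[OF s1 s2]) (use r u \<delta> in auto)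
    have "cmod (a r * complex_of_real (E r)) = cmod (a r) * \<bar>E r\<bar>" by (simp add: norm_mult)
    also have "\<dots> \<le> (2 * C2 / (r + c0)) * (M * m u)"
    proof (rule mult_mono[OF ab])
      show "\<bar>E r\<bar> \<le> M * m u" using Eb[OF r] m_mono[OF r] M1 by (meson le_numeral_extra(1) mult_left_mono order_trans zero_le_one order.trans)
      show "0 \<le> 2 * C2 / (r + c0)" using C2 c0 r by auto
    qed simp
    also have "\<dots> = 2 * C2 * M * m u / (r + c0) + 0 / sqrt (r + c0) + 0" by simp
    finally show "cmod (a r * complex_of_real (E r)) \<le> 2 * C2 * M * m u / (r + c0) + 0 / sqrt (r + c0) + 0" .
  next
    show "continuous_on {0..u} a" unfolding a_def by (rule a_cont[OF s1 s2]) (use u \<delta> in auto)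
  qed
  moreover have "D 0 = 0" using G0[OF s1] G0[OF s2] by (simp add: D_def)
  ultimately have Db: "cmod (D u) \<le> exp (Kc * T) * 2 * C2 * M / \<kappa>0 * m u" by simp
  have "cmod (fs (s + \<delta>) u - fs s u) \<le> cmod (D u) + \<bar>E u\<bar>"
    unfolding fdiff using norm_triangle_ineq[of "D u" "complex_of_real (E u)"] by simp
  also have "\<dots> \<le> exp (Kc * T) * 2 * C2 * M / \<kappa>0 * m u + M * m u"
    using Db Eb[of u] u by (intro add_mono) auto
  also have "\<dots> = CA * m u" by (simp add: CA_def algebra_simps)
  finally show ?thesis by (simp add: m_def)
qed

end

context loew begin

lemma powr_le_TT: "0 \<le> r \<Longrightarrow> r \<le> T \<Longrightarrow> r powr \<alpha> \<le> max 1 T"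
proof (cases "r \<le> 1")
  case True
  assume "0 \<le> r"
  then have "r powr \<alpha> \<le> 1" using True \<alpha> by (intro powr_le1) auto
  then show ?thesis by simp
next
  case False
  assume "0 \<le> r" "r \<le> T"
  have "r powr \<alpha> \<le> r powr 1" using False \<alpha> by (intro powr_mono) auto
  then show ?thesis using False \<open>r \<le> T\<close> by simp
qed

definition Dl :: "real \<Rightarrow> real \<Rightarrow> real" where "Dl s r = dlam s - dlam (s - r)"
definition af :: "real \<Rightarrow> real \<Rightarrow> complex" where "af s r = 2 / (fs s r * fs s r)"
definition A :: "real \<Rightarrow> real \<Rightarrow> complex" where "A s r = integral {0..r} (af s)"
definition w :: "real \<Rightarrow> real \<Rightarrow> complex" where
  "w s r = exp (A s r) * integral {0..r} (\<lambda>v. exp (- A s v) * (af s v * complex_of_real (Dl s v)))"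
definition W :: "real \<Rightarrow> real \<Rightarrow> complex" where "W s r = w s r + complex_of_real (Dl s r)"

lemma Dl_bound: "0 \<le> r \<Longrightarrow> r \<le> s \<Longrightarrow> s \<le> T \<Longrightarrow> \<bar>Dl s r\<bar> \<le> M * r powr \<alpha>"
  unfolding Dl_def using dlam_h[of s "s - r"] by simp

lemma Dl_cont: "0 \<le> s \<Longrightarrow> s \<le> T \<Longrightarrow> continuous_on {0..s} (\<lambda>r. complex_of_real (Dl s r))"
  unfolding Dl_def using dlam_shift_cont by (intro continuous_intros) auto

lemma af_cont: "0 \<le> s \<Longrightarrow> s \<le> T \<Longrightarrow> continuous_on {0..s} (af s)"
  unfolding af_def[abs_def] using a_cont by auto

lemma w_d:
  assumes s: "0 \<le> s" "s \<le> T" and r: "r \<in> {0..s}"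
  shows "(w s has_vector_derivative af s r * (w s r + complex_of_real (Dl s r))) (at r within {0..s})"
proof -
  have dA: "(A s has_vector_derivative af s t) (at t within {0..s})" if "t \<in> {0..s}" for t
    unfolding A_def by (rule integral_has_vector_derivative[OF af_cont[OF s] that])
  have Ac: "continuous_on {0..s} (A s)" using dA by (rule continuous_on_vector_derivative)
  have ic: "continuous_on {0..s} (\<lambda>v. exp (- A s v) * (af s v * complex_of_real (Dl s v)))"
    using Ac af_cont[OF s] Dl_cont[OF s] by (intro continuous_intros) auto
  have dI: "((\<lambda>r. integral {0..r} (\<lambda>v. exp (- A s v) * (af s v * complex_of_real (Dl s v)))) has_vector_derivative
      exp (- A s r) * (af s r * complex_of_real (Dl s r))) (at r within {0..s})"
    by (rule integral_has_vector_derivative[OF ic r])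
  have dE: "((\<lambda>r. exp (A s r)) has_vector_derivative af s r * exp (A s r)) (at r within {0..s})"
    by (rule vd_exp[OF dA[OF r]])
  have "(w s has_vector_derivative exp (A s r) * (exp (- A s r) * (af s r * complex_of_real (Dl s r)))
      + af s r * exp (A s r) * integral {0..r} (\<lambda>v. exp (- A s v) * (af s v * complex_of_real (Dl s v)))) (at r within {0..s})"
    unfolding w_def[abs_def] by (rule has_vector_derivative_mult[OF dE dI])
  moreover have "exp (A s r) * (exp (- A s r) * (af s r * complex_of_real (Dl s r)))
      + af s r * exp (A s r) * integral {0..r} (\<lambda>v. exp (- A s v) * (af s v * complex_of_real (Dl s v)))
      = af s r * (w s r + complex_of_real (Dl s r))"
  proof -
    have "exp (A s r) * exp (- A s r) = 1" by (simp add: exp_minus field_simps)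
    then show ?thesis unfolding w_def by (simp add: algebra_simps)
  qed
  ultimately show ?thesis by simp
qed

lemma w0: "w s 0 = 0" by (simp add: w_def)

definition "Cw = exp (Kc * T) * 2 * C2 * M / \<kappa>0"

lemma Cw: "0 \<le> Cw" using C2 \<kappa>0 M1 by (simp add: Cw_def)

lemma w_bound:
  assumes s: "0 \<le> s" "s \<le> T" and u: "0 \<le> u" "u \<le> s"
  shows "cmod (w s u) \<le> Cw * u powr \<alpha>"
proof -
  have sub: "{0..u} \<subseteq> {0..s}" using u by auto
  have "cmod (w s u) \<le> exp (Kc * T) * (cmod (w s 0) + (2 * C2 * M * u powr \<alpha>) / \<kappa>0 + 2 * 0 * sqrt (T + c0) + 0 * T)"
  proof (rule LL2[OF u(1) _ c0(1) \<kappa>0 Kc _ order_refl order_refl, where a = "af s" and b = "\<lambda>r. af s r * complex_of_real (Dl s r)"])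
    show "u \<le> T" using u s by auto
    show "0 \<le> 2 * C2 * M * u powr \<alpha>" using C2 M1 by simp
    fix r assume r: "r \<in> {0..u}"
    then have r': "r \<in> {0..s}" using sub by auto
    show "(w s has_vector_derivative af s r * w s r + af s r * complex_of_real (Dl s r)) (at r within {0..u})"
      using has_vector_derivative_within_subset[OF w_d[OF s r'] sub] by (simp add: algebra_simps)
    show "Re (af s r) \<le> Kc - \<kappa>0 / (r + c0)" unfolding af_def by (rule a_bounds(1)[OF s s]) (use r u in auto)
    have ab: "cmod (af s r) \<le> 2 * C2 / (r + c0)" unfolding af_def by (rule a_bounds(2)[OF s s]) (use r u in auto)
    have db: "\<bar>Dl s r\<bar> \<le> M * u powr \<alpha>"
    proof -
      have "\<bar>Dl s r\<bar> \<le> M * r powr \<alpha>" by (rule Dl_bound) (use r u s in auto)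
      also have "\<dots> \<le> M * u powr \<alpha>" using r M1 \<alpha> by (intro mult_left_mono powr_mono2) auto
      finally show ?thesis .
    qed
    have "cmod (af s r * complex_of_real (Dl s r)) = cmod (af s r) * \<bar>Dl s r\<bar>" by (simp add: norm_mult)
    also have "\<dots> \<le> (2 * C2 / (r + c0)) * (M * u powr \<alpha>)"
      by (rule mult_mono[OF ab db]) (use C2 c0 r in auto)
    also have "\<dots> = 2 * C2 * M * u powr \<alpha> / (r + c0) + 0 / sqrt (r + c0) + 0" by simp
    finally show "cmod (af s r * complex_of_real (Dl s r)) \<le> 2 * C2 * M * u powr \<alpha> / (r + c0) + 0 / sqrt (r + c0) + 0" .
  next
    show "continuous_on {0..u} (af s)" by (rule continuous_on_subset[OF af_cont[OF s] sub])
  qed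
  then show ?thesis by (simp add: w0 Cw_def)
qed

lemma W_bound:
  assumes s: "0 \<le> s" "s \<le> T" and u: "0 \<le> u" "u \<le> s"
  shows "cmod (W s u) \<le> (Cw + M) * u powr \<alpha>"
proof -
  have "cmod (W s u) \<le> cmod (w s u) + \<bar>Dl s u\<bar>"
    unfolding W_def using norm_triangle_ineq[of "w s u" "complex_of_real (Dl s u)"] by simp
  also have "\<dots> \<le> Cw * u powr \<alpha> + M * u powr \<alpha>"
    using w_bound[OF s u] Dl_bound[of u s] u s by (intro add_mono) auto
  finally show ?thesis by (simp add: algebra_simps)
qed

end

context loew begin

lemma inv_norm_bound:
  assumes s: "0 \<le> s" "s \<le> T" and r: "0 \<le> r" "r \<le> s"
  shows "1 / cmod (fs s r) \<le> sqrt (C2 / (r + c0))"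
proof -
  have g: "good M \<epsilon> r (fs s r)" by (rule fs_good[OF s]) (use r in auto)
  have "1 / (cmod (fs s r) * cmod (fs s r)) \<le> C2 / (r + c0)"
    using good_inv[OF M1 \<epsilon> r(1) _ g g] r s unfolding C2_def c0_def by auto
  then have "sqrt ((1 / cmod (fs s r))^2) \<le> sqrt (C2 / (r + c0))"
    by (simp add: power2_eq_square)
  then show ?thesis by simp
qed

lemma af_diff:
  assumes s1: "0 \<le> s1" "s1 \<le> T" and s2: "0 \<le> s2" "s2 \<le> T" and r: "0 \<le> r" "r \<le> s1" "r \<le> s2"
  shows "cmod (af s1 r - af s2 r) \<le> 4 * cmod (fs s1 r - fs s2 r) * (C2 / (r + c0)) * sqrt (C2 / (r + c0))"
proof -
  define z1 where "z1 = fs s1 r"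
  define z2 where "z2 = fs s2 r"
  have nz: "z1 \<noteq> 0" "z2 \<noteq> 0" unfolding z1_def z2_def using fs_nz[OF s1] fs_nz[OF s2] r by auto
  define n1 where "n1 = cmod z1"
  define n2 where "n2 = cmod z2"
  have n: "0 < n1" "0 < n2" using nz by (auto simp: n1_def n2_def)
  define Q where "Q = sqrt (C2 / (r + c0))"
  have P: "1 / (n1 * n2) \<le> C2 / (r + c0)"
  proof -
    have "2 / (n1 * n2) \<le> 2 * C2 / (r + c0)"
      using a_bounds(2)[OF s1 s2 r] by (simp add: n1_def n2_def z1_def z2_def norm_divide norm_mult)
    then show ?thesis by simp
  qed
  have Q1: "1 / n1 \<le> Q" unfolding n1_def z1_def Q_def by (rule inv_norm_bound[OF s1 r(1,2)])
  have Q2: "1 / n2 \<le> Q" unfolding n2_def z2_def Q_def by (rule inv_norm_bound[OF s2 r(1,3)])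
  have "af s1 r - af s2 r = 2 * (z2 - z1) * (z2 + z1) / (z1 * z1 * (z2 * z2))"
    using nz by (simp add: af_def z1_def[symmetric] z2_def[symmetric] field_simps)
  then have "cmod (af s1 r - af s2 r) = 2 * cmod (z2 - z1) * cmod (z2 + z1) / (n1 * n1 * (n2 * n2))"
    unfolding n1_def n2_def by (simp only: norm_divide norm_mult) simp
  also have "\<dots> \<le> 2 * cmod (z2 - z1) * (n1 + n2) / (n1 * n1 * (n2 * n2))"
  proof -
    have "cmod (z2 + z1) \<le> n1 + n2" unfolding n1_def n2_def using norm_triangle_ineq[of z2 z1] by simp
    then show ?thesis using n by (intro divide_right_mono mult_left_mono) auto
  qed
  also have "\<dots> = 2 * cmod (z2 - z1) * ((1 / (n1 * n2)) * (1 / n1 + 1 / n2))"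
    using n by (simp add: field_simps)
  also have "\<dots> \<le> 2 * cmod (z2 - z1) * ((C2 / (r + c0)) * (Q + Q))"
    using P Q1 Q2 n C2 c0 r by (intro mult_left_mono mult_mono add_mono) auto
  also have "\<dots> = 4 * cmod (z1 - z2) * (C2 / (r + c0)) * Q"
    by (simp add: norm_minus_commute algebra_simps)
  finally show ?thesis unfolding Q_def z1_def z2_def .
qed

definition "B2c = 4 * CA * C2 * sqrt C2 * (Cw + M) * max 1 T"
definition "CB = exp (Kc * T) * (4 * C2 * M / \<kappa>0 + 2 * B2c * sqrt (T + 1)) + 2 * M"

lemma B2c: "0 \<le> B2c" using CA C2 Cw M1 by (simp add: B2c_def)

lemma W_diff:
  assumes u: "0 \<le> u" "u \<le> s" and \<delta>: "0 \<le> \<delta>" "s + \<delta> \<le> T"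
  shows "cmod (W (s + \<delta>) u - W s u) \<le> CB * \<delta> powr \<alpha>"
proof -
  have s1: "0 \<le> s + \<delta>" "s + \<delta> \<le> T" and s2: "0 \<le> s" "s \<le> T" using u \<delta> by auto
  define Dd where "Dd r = Dl (s + \<delta>) r - Dl s r" for r
  have Ddb: "\<bar>Dd r\<bar> \<le> 2 * M * \<delta> powr \<alpha>" if r: "r \<in> {0..u}" for r
  proof -
    have h1: "\<bar>dlam (s + \<delta>) - dlam s\<bar> \<le> M * \<delta> powr \<alpha>"
      using dlam_h[of "s + \<delta>" s] s1 s2 \<delta> by simp
    have h2: "\<bar>dlam (s + \<delta> - r) - dlam (s - r)\<bar> \<le> M * \<delta> powr \<alpha>"
      using dlam_h[of "s + \<delta> - r" "s - r"] s1 s2 \<delta> r u by simp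
    show ?thesis unfolding Dd_def Dl_def using h1 h2 by linarith
  qed
  define D where "D r = w (s + \<delta>) r - w s r" for r
  define a where "a r = af (s + \<delta>) r" for r
  define b where "b r = af (s + \<delta>) r * complex_of_real (Dd r) + (af (s + \<delta>) r - af s r) * W s r" for r
  have sub1: "{0..u} \<subseteq> {0..s + \<delta>}" and sub2: "{0..u} \<subseteq> {0..s}" using u \<delta> by auto
  have "cmod (D u) \<le> exp (Kc * T) * (cmod (D 0) + (4 * C2 * M * \<delta> powr \<alpha>) / \<kappa>0 + 2 * (B2c * \<delta> powr \<alpha>) * sqrt (T + c0) + 0 * T)"
  proof (rule LL2[OF u(1) _ c0(1) \<kappa>0 Kc _ _ order_refl, where a = a and b = b])
    show "u \<le> T" using u s2 by auto
    show "0 \<le> 4 * C2 * M * \<delta> powr \<alpha>" using C2 M1 by simp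
    show "0 \<le> B2c * \<delta> powr \<alpha>" using B2c by simp
    fix r assume r: "r \<in> {0..u}"
    have r1: "r \<in> {0..s + \<delta>}" and r2: "r \<in> {0..s}" using r sub1 sub2 by auto
    have "(D has_vector_derivative af (s + \<delta>) r * (w (s + \<delta>) r + complex_of_real (Dl (s + \<delta>) r))
        - af s r * (w s r + complex_of_real (Dl s r))) (at r within {0..u})"
      unfolding D_def
      by (rule has_vector_derivative_diff[OF has_vector_derivative_within_subset[OF w_d[OF s1 r1] sub1]
            has_vector_derivative_within_subset[OF w_d[OF s2 r2] sub2]])
    moreover have "af (s + \<delta>) r * (w (s + \<delta>) r + complex_of_real (Dl (s + \<delta>) r))
        - af s r * (w s r + complex_of_real (Dl s r)) = a r * D r + b r"
      by (simp add: a_def b_def D_def Dd_def W_def algebra_simps)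
    ultimately show "(D has_vector_derivative a r * D r + b r) (at r within {0..u})" by simp
    show "Re (a r) \<le> Kc - \<kappa>0 / (r + c0)" unfolding a_def af_def by (rule a_bounds(1)[OF s1 s1]) (use r1 in auto)
    have rc: "0 < r + c0" using r c0 by auto
    have ab: "cmod (af (s + \<delta>) r) \<le> 2 * C2 / (r + c0)" unfolding af_def by (rule a_bounds(2)[OF s1 s1]) (use r1 in auto)
    have t1: "cmod (af (s + \<delta>) r * complex_of_real (Dd r)) \<le> 4 * C2 * M * \<delta> powr \<alpha> / (r + c0)"
    proof -
      have "cmod (af (s + \<delta>) r * complex_of_real (Dd r)) = cmod (af (s + \<delta>) r) * \<bar>Dd r\<bar>" by (simp add: norm_mult)
      also have "\<dots> \<le> (2 * C2 / (r + c0)) * (2 * M * \<delta> powr \<alpha>)"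
        by (rule mult_mono[OF ab Ddb[OF r]]) (use C2 rc in auto)
      also have "\<dots> = 4 * C2 * M * \<delta> powr \<alpha> / (r + c0)" by simp
      finally show ?thesis .
    qed
    have t2: "cmod ((af (s + \<delta>) r - af s r) * W s r) \<le> B2c * \<delta> powr \<alpha> / sqrt (r + c0)"
    proof -
      have fd: "cmod (fs (s + \<delta>) r - fs s r) \<le> CA * (r * \<delta> powr \<alpha>)"
      proof -
        have "cmod (fs (s + \<delta>) r - fs s r) \<le> CA * min (r * \<delta> powr \<alpha>) (\<delta> * r powr \<alpha>)"
          by (rule first_bound) (use r u \<delta> in auto)
        also have "\<dots> \<le> CA * (r * \<delta> powr \<alpha>)" using CA by (intro mult_left_mono) auto
        finally show ?thesis .
      qed
      have Wb: "cmod (W s r) \<le> (Cw + M) * max 1 T"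
      proof -
        have "cmod (W s r) \<le> (Cw + M) * r powr \<alpha>" by (rule W_bound[OF s2]) (use r2 in auto)
        also have "\<dots> \<le> (Cw + M) * max 1 T" using Cw M1 powr_le_TT[of r] r2 s2 by (intro mult_left_mono) auto
        finally show ?thesis .
      qed
      have adb: "cmod (af (s + \<delta>) r - af s r) \<le> 4 * (CA * (r * \<delta> powr \<alpha>)) * (C2 / (r + c0)) * sqrt (C2 / (r + c0))"
      proof -
        have "cmod (af (s + \<delta>) r - af s r) \<le> 4 * cmod (fs (s + \<delta>) r - fs s r) * (C2 / (r + c0)) * sqrt (C2 / (r + c0))"
          by (rule af_diff[OF s1 s2]) (use r1 r2 in auto)
        also have "\<dots> \<le> 4 * (CA * (r * \<delta> powr \<alpha>)) * (C2 / (r + c0)) * sqrt (C2 / (r + c0))"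
          using fd C2 rc by (intro mult_right_mono) auto
        finally show ?thesis .
      qed
      have "cmod ((af (s + \<delta>) r - af s r) * W s r) = cmod (af (s + \<delta>) r - af s r) * cmod (W s r)"
        by (simp add: norm_mult)
      also have "\<dots> \<le> (4 * (CA * (r * \<delta> powr \<alpha>)) * (C2 / (r + c0)) * sqrt (C2 / (r + c0))) * ((Cw + M) * max 1 T)"
        by (rule mult_mono[OF adb Wb]) (use CA C2 rc r in auto)
      also have "\<dots> = (4 * CA * C2 * sqrt C2 * (Cw + M) * max 1 T) * \<delta> powr \<alpha> * (r / (r + c0)) / sqrt (r + c0)"
        using rc by (simp add: real_sqrt_divide field_simps)
      also have "\<dots> \<le> (4 * CA * C2 * sqrt C2 * (Cw + M) * max 1 T) * \<delta> powr \<alpha> * 1 / sqrt (r + c0)"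
      proof -
        have "r / (r + c0) \<le> 1" using rc c0 by simp
        moreover have "0 \<le> (4 * CA * C2 * sqrt C2 * (Cw + M) * max 1 T) * \<delta> powr \<alpha>"
          using B2c unfolding B2c_def by simp
        ultimately show ?thesis using rc by (intro divide_right_mono mult_left_mono) auto
      qed
      finally show ?thesis by (simp add: B2c_def)
    qed
    have "cmod (b r) \<le> cmod (af (s + \<delta>) r * complex_of_real (Dd r)) + cmod ((af (s + \<delta>) r - af s r) * W s r)"
      unfolding b_def by (rule norm_triangle_ineq)
    also have "\<dots> \<le> 4 * C2 * M * \<delta> powr \<alpha> / (r + c0) + B2c * \<delta> powr \<alpha> / sqrt (r + c0)"
      using t1 t2 by simp
    finally show "cmod (b r) \<le> 4 * C2 * M * \<delta> powr \<alpha> / (r + c0) + B2c * \<delta> powr \<alpha> / sqrt (r + c0) + 0" by simp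
  next
    show "continuous_on {0..u} a" unfolding a_def by (rule continuous_on_subset[OF af_cont[OF s1] sub1])
  qed
  moreover have "D 0 = 0" by (simp add: D_def w0)
  ultimately have Db: "cmod (D u) \<le> exp (Kc * T) * ((4 * C2 * M * \<delta> powr \<alpha>) / \<kappa>0 + 2 * (B2c * \<delta> powr \<alpha>) * sqrt (T + c0))"
    by simp
  also have "\<dots> \<le> exp (Kc * T) * ((4 * C2 * M * \<delta> powr \<alpha>) / \<kappa>0 + 2 * (B2c * \<delta> powr \<alpha>) * sqrt (T + 1))"
    using c0 B2c by (intro mult_left_mono add_mono) (auto intro!: mult_left_mono)
  also have "\<dots> = exp (Kc * T) * (4 * C2 * M / \<kappa>0 + 2 * B2c * sqrt (T + 1)) * \<delta> powr \<alpha>"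
    by (simp add: algebra_simps)
  finally have Db2: "cmod (D u) \<le> exp (Kc * T) * (4 * C2 * M / \<kappa>0 + 2 * B2c * sqrt (T + 1)) * \<delta> powr \<alpha>" .
  have "W (s + \<delta>) u - W s u = D u + complex_of_real (Dd u)" by (simp add: W_def D_def Dd_def)
  then have "cmod (W (s + \<delta>) u - W s u) \<le> cmod (D u) + \<bar>Dd u\<bar>"
    using norm_triangle_ineq[of "D u" "complex_of_real (Dd u)"] by simp
  also have "\<dots> \<le> exp (Kc * T) * (4 * C2 * M / \<kappa>0 + 2 * B2c * sqrt (T + 1)) * \<delta> powr \<alpha> + 2 * M * \<delta> powr \<alpha>"
    using Db2 Ddb[of u] u by (intro add_mono) auto
  also have "\<dots> = CB * \<delta> powr \<alpha>" by (simp add: CB_def algebra_simps)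
  finally show ?thesis .
qed

end

context loew begin

lemma taylor:
  assumes a: "a \<in> {0..T}" and b: "b \<in> {0..T}"
  shows "\<bar>lam b - lam a - (b - a) * dlam a\<bar> \<le> M * \<bar>b - a\<bar> powr \<alpha> * \<bar>b - a\<bar>"
proof -
  define f where "f t = lam t - t * dlam a" for t
  have key: "\<bar>f y - f x\<bar> \<le> M * \<bar>b - a\<bar> powr \<alpha> * (y - x)"
    if xy: "x \<le> y" "{x..y} \<subseteq> {0..T}" "\<And>t. t \<in> {x..y} \<Longrightarrow> \<bar>t - a\<bar> \<le> \<bar>b - a\<bar>" for x y
  proof -
    have "\<bar>f y - f x\<bar> \<le> (\<lambda>t. M * \<bar>b - a\<bar> powr \<alpha> * t) y - (\<lambda>t. M * \<bar>b - a\<bar> powr \<alpha> * t) x"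
    proof (rule bound_within_real[where f' = "\<lambda>t. dlam t - 1 * dlam a" and \<phi>' = "\<lambda>_. M * \<bar>b - a\<bar> powr \<alpha>"])
      show "x \<le> y" by fact
      fix t assume t: "t \<in> {x..y}"
      have tT: "t \<in> {0..T}" using t xy by auto
      show "(f has_real_derivative dlam t - 1 * dlam a) (at t within {x..y})"
        unfolding f_def
        by (rule DERIV_diff[OF DERIV_subset[OF lam_d[OF tT] xy(2)] DERIV_cmult_right[OF DERIV_ident]])
      show "((\<lambda>t. M * \<bar>b - a\<bar> powr \<alpha> * t) has_real_derivative M * \<bar>b - a\<bar> powr \<alpha>) (at t within {x..y})"
        using DERIV_cmult[OF DERIV_ident, of "M * \<bar>b - a\<bar> powr \<alpha>"] by simp
      have "\<bar>dlam t - dlam a\<bar> \<le> M * \<bar>t - a\<bar> powr \<alpha>" by (rule dlam_h[OF tT a])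
      also have "\<dots> \<le> M * \<bar>b - a\<bar> powr \<alpha>" using xy(3)[OF t] M1 \<alpha> by (intro mult_left_mono powr_mono2) auto
      finally show "\<bar>dlam t - 1 * dlam a\<bar> \<le> M * \<bar>b - a\<bar> powr \<alpha>" by simp
    qed
    then show ?thesis by (simp add: algebra_simps)
  qed
  show ?thesis
  proof (cases "a \<le> b")
    case True
    have "\<bar>f b - f a\<bar> \<le> M * \<bar>b - a\<bar> powr \<alpha> * (b - a)" by (rule key) (use True a b in auto)
    then show ?thesis using True by (simp add: f_def algebra_simps)
  next
    case False
    have "\<bar>f a - f b\<bar> \<le> M * \<bar>b - a\<bar> powr \<alpha> * (a - b)" by (rule key) (use False a b in auto)
    then show ?thesis using False by (simp add: f_def algebra_simps abs_minus_commute)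
  qed
qed

lemma fs_lip:
  assumes r: "0 \<le> r" and s: "r \<le> s" "s \<le> T" and s': "r \<le> s'" "s' \<le> T"
  shows "cmod (fs s' r - fs s r) \<le> CA * max 1 T * \<bar>s' - s\<bar>"
proof (cases "s \<le> s'")
  case True
  have "cmod (fs (s + (s' - s)) r - fs s r) \<le> CA * min (r * (s' - s) powr \<alpha>) ((s' - s) * r powr \<alpha>)"
    by (rule first_bound) (use True r s s' in auto)
  also have "\<dots> \<le> CA * ((s' - s) * max 1 T)"
  proof (rule mult_left_mono[OF _ CA])
    have "min (r * (s' - s) powr \<alpha>) ((s' - s) * r powr \<alpha>) \<le> (s' - s) * r powr \<alpha>" by simp
    also have "\<dots> \<le> (s' - s) * max 1 T" by (rule mult_left_mono[OF powr_le_TT]) (use r s True in auto)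
    finally show "min (r * (s' - s) powr \<alpha>) ((s' - s) * r powr \<alpha>) \<le> (s' - s) * max 1 T" .
  qed
  finally show ?thesis using True by (simp add: algebra_simps)
next
  case False
  have "cmod (fs (s' + (s - s')) r - fs s' r) \<le> CA * min (r * (s - s') powr \<alpha>) ((s - s') * r powr \<alpha>)"
    by (rule first_bound) (use False r s s' in auto)
  also have "\<dots> \<le> CA * ((s - s') * max 1 T)"
  proof (rule mult_left_mono[OF _ CA])
    have "min (r * (s - s') powr \<alpha>) ((s - s') * r powr \<alpha>) \<le> (s - s') * r powr \<alpha>" by simp
    also have "\<dots> \<le> (s - s') * max 1 T" by (rule mult_left_mono[OF powr_le_TT]) (use r s' False in auto)
    finally show "min (r * (s - s') powr \<alpha>) ((s - s') * r powr \<alpha>) \<le> (s - s') * max 1 T" .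
  qed
  finally show ?thesis using False by (simp add: algebra_simps norm_minus_commute)
qed

lemma E_lip:
  assumes r: "0 \<le> r" and s: "r \<le> s" "s \<le> T" and s': "r \<le> s'" "s' \<le> T"
  shows "\<bar>lam s' - lam (s' - r) - lam s + lam (s - r)\<bar> \<le> M * max 1 T * \<bar>s' - s\<bar>"
proof (cases "s \<le> s'")
  case True
  have "\<bar>lam (s + (s' - s)) - lam (s + (s' - s) - r) - lam s + lam (s - r)\<bar> \<le> M * r powr \<alpha> * (s' - s)"
    by (rule E_bound2) (use True r s s' in auto)
  also have "\<dots> \<le> M * max 1 T * (s' - s)"
    using M1 powr_le_TT[of r] r s True by (intro mult_right_mono mult_left_mono) auto
  finally show ?thesis using True by simp
next
  case False
  have "\<bar>lam (s' + (s - s')) - lam (s' + (s - s') - r) - lam s' + lam (s' - r)\<bar> \<le> M * r powr \<alpha> * (s - s')"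
    by (rule E_bound2) (use False r s s' in auto)
  also have "\<dots> \<le> M * max 1 T * (s - s')"
    using M1 powr_le_TT[of r] r s False by (intro mult_right_mono mult_left_mono) auto
  finally show ?thesis using False by (simp add: abs_minus_commute algebra_simps)
qed

lemma norm_ge_eps: assumes "0 \<le> s" "s \<le> T" "r \<in> {0..s}" shows "\<epsilon> \<le> cmod (fs s r)"
proof -
  have "\<epsilon> \<le> Im (fs s r)" by (rule gIm[OF assms(1,2) fs_sol[OF assms(1,2)] assms(3)])
  then show ?thesis using abs_Im_le_cmod[of "fs s r"] by linarith
qed

definition "Cd1 = 2 * CA * max 1 T / \<epsilon>^3 * (Cw * max 1 T + M * max 1 T)"
definition "Cd2 = 4 * M / \<epsilon>^2"

lemma diff_est:
  assumes u: "0 \<le> u" "u \<le> s" "s \<le> T" and s': "u \<le> s'" "s' \<le> T"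
  shows "cmod (fs s' u - fs s u - complex_of_real (s' - s) * W s u)
     \<le> exp (Kc * T) * (Cd1 * (s' - s)^2 + Cd2 * (\<bar>s' - s\<bar> powr \<alpha> * \<bar>s' - s\<bar>)) * T + 2 * M * (\<bar>s' - s\<bar> powr \<alpha> * \<bar>s' - s\<bar>)"
proof -
  define h where "h = s' - s"
  have s1: "0 \<le> s'" "s' \<le> T" and s2: "0 \<le> s" "s \<le> T" using u s' by auto
  define E where "E r = lam s' - lam (s' - r) - lam s + lam (s - r)" for r
  define D where "D r = G s' r - G s r - complex_of_real h * w s r" for r
  define a where "a r = 2 / (fs s' r * fs s r)" for r
  define b where "b r = (a r - af s r) * (complex_of_real h * w s r + complex_of_real (E r))
      + af s r * (complex_of_real (E r) - complex_of_real h * complex_of_real (Dl s r))" for r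
  have fdiff: "fs s' r - fs s r = D r + complex_of_real h * w s r + complex_of_real (E r)" for r
    by (simp add: D_def G_def E_def)
  have sub1: "{0..u} \<subseteq> {0..s'}" and sub2: "{0..u} \<subseteq> {0..s}" using u s' by auto
  have EhD: "\<bar>E r - h * Dl s r\<bar> \<le> 2 * M * (\<bar>h\<bar> powr \<alpha> * \<bar>h\<bar>)" if r: "r \<in> {0..u}" for r
  proof -
    have t1: "\<bar>lam s' - lam s - (s' - s) * dlam s\<bar> \<le> M * \<bar>s' - s\<bar> powr \<alpha> * \<bar>s' - s\<bar>"
      by (rule taylor) (use s1 s2 in auto)
    have t2: "\<bar>lam (s' - r) - lam (s - r) - ((s' - r) - (s - r)) * dlam (s - r)\<bar> \<le> M * \<bar>(s' - r) - (s - r)\<bar> powr \<alpha> * \<bar>(s' - r) - (s - r)\<bar>"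
      by (rule taylor) (use r u s' in auto)
    have "E r - h * Dl s r = (lam s' - lam s - (s' - s) * dlam s) - (lam (s' - r) - lam (s - r) - ((s' - r) - (s - r)) * dlam (s - r))"
      by (simp add: E_def h_def Dl_def algebra_simps)
    then show ?thesis using t1 t2 by (simp add: h_def)
  qed
  have "cmod (D u) \<le> exp (Kc * T) * (cmod (D 0) + 0 / \<kappa>0 + 2 * 0 * sqrt (T + c0) + (Cd1 * h^2 + Cd2 * (\<bar>h\<bar> powr \<alpha> * \<bar>h\<bar>)) * T)"
  proof (rule LL2[OF u(1) _ c0(1) \<kappa>0 Kc order_refl order_refl, where a = a and b = b])
    show "u \<le> T" using u by auto
    show "0 \<le> Cd1 * h^2 + Cd2 * (\<bar>h\<bar> powr \<alpha> * \<bar>h\<bar>)" using CA Cw M1 \<epsilon>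
      by (intro add_nonneg_nonneg mult_nonneg_nonneg) (auto simp: Cd1_def Cd2_def)
    fix r assume r: "r \<in> {0..u}"
    have r1: "r \<in> {0..s'}" and r2: "r \<in> {0..s}" using r sub1 sub2 by auto
    have nz: "fs s' r \<noteq> 0" "fs s r \<noteq> 0" using fs_nz[OF s1 r1] fs_nz[OF s2 r2] by auto
    have "(D has_vector_derivative -2 / fs s' r - -2 / fs s r - complex_of_real h * (af s r * (w s r + complex_of_real (Dl s r)))) (at r within {0..u})"
      unfolding D_def
      by (intro has_vector_derivative_diff has_vector_derivative_mult_right
          has_vector_derivative_within_subset[OF G_d[OF s1 r1] sub1]
          has_vector_derivative_within_subset[OF G_d[OF s2 r2] sub2]
          has_vector_derivative_within_subset[OF w_d[OF s2 r2] sub2])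
    moreover have "-2 / fs s' r - -2 / fs s r - complex_of_real h * (af s r * (w s r + complex_of_real (Dl s r))) = a r * D r + b r"
    proof -
      have "-2 / fs s' r - -2 / fs s r = a r * (fs s' r - fs s r)"
        using nz by (simp add: a_def field_simps)
      then show ?thesis unfolding fdiff by (simp add: b_def algebra_simps)
    qed
    ultimately show "(D has_vector_derivative a r * D r + b r) (at r within {0..u})" by simp
    show "Re (a r) \<le> Kc - \<kappa>0 / (r + c0)" unfolding a_def by (rule a_bounds(1)[OF s1 s2]) (use r1 r2 in auto)
    have e1: "\<epsilon> \<le> cmod (fs s' r)" "\<epsilon> \<le> cmod (fs s r)" using norm_ge_eps[OF s1 r1] norm_ge_eps[OF s2 r2] by auto
    have ad: "cmod (a r - af s r) \<le> 2 * (CA * max 1 T * \<bar>h\<bar>) / \<epsilon>^3"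
    proof -
      have "a r - af s r = 2 * (fs s r - fs s' r) / (fs s' r * fs s r * fs s r)"
        using nz by (simp add: a_def af_def field_simps)
      then have "cmod (a r - af s r) = 2 * cmod (fs s r - fs s' r) / (cmod (fs s' r) * cmod (fs s r) * cmod (fs s r))"
        by (simp only: norm_divide norm_mult) simp
      also have "\<dots> \<le> 2 * (CA * max 1 T * \<bar>h\<bar>) / (\<epsilon> * \<epsilon> * \<epsilon>)"
      proof (rule frac_le)
        show "0 \<le> 2 * (CA * max 1 T * \<bar>h\<bar>)" using CA by simp
        have "cmod (fs s r - fs s' r) \<le> CA * max 1 T * \<bar>h\<bar>"
          using fs_lip[of r s' s] r u s' by (simp add: norm_minus_commute h_def abs_minus_commute)
        then show "2 * cmod (fs s r - fs s' r) \<le> 2 * (CA * max 1 T * \<bar>h\<bar>)" by simp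
        show "0 < \<epsilon> * \<epsilon> * \<epsilon>" using \<epsilon> by simp
        show "\<epsilon> * \<epsilon> * \<epsilon> \<le> cmod (fs s' r) * cmod (fs s r) * cmod (fs s r)"
          using e1 \<epsilon> by (intro mult_mono) auto
      qed
      finally show ?thesis by (simp add: power3_eq_cube)
    qed
    have hw: "cmod (complex_of_real h * w s r + complex_of_real (E r)) \<le> \<bar>h\<bar> * (Cw * max 1 T + M * max 1 T)"
    proof -
      have "cmod (w s r) \<le> Cw * max 1 T"
      proof -
        have "cmod (w s r) \<le> Cw * r powr \<alpha>" by (rule w_bound[OF s2]) (use r2 in auto)
        also have "\<dots> \<le> Cw * max 1 T" using Cw powr_le_TT[of r] r2 s2 by (intro mult_left_mono) auto
        finally show ?thesis .
      qed
      moreover have "\<bar>E r\<bar> \<le> M * max 1 T * \<bar>h\<bar>" unfolding E_def h_def by (rule E_lip) (use r u s' in auto)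
      ultimately have "cmod (complex_of_real h * w s r) + \<bar>E r\<bar> \<le> \<bar>h\<bar> * (Cw * max 1 T) + M * max 1 T * \<bar>h\<bar>"
        by (intro add_mono) (auto simp: norm_mult intro: mult_left_mono)
      then show ?thesis using norm_triangle_ineq[of "complex_of_real h * w s r" "complex_of_real (E r)"]
        by (simp add: algebra_simps)
    qed
    have afb: "cmod (af s r) \<le> 2 / \<epsilon>^2"
    proof -
      have "cmod (af s r) = 2 / (cmod (fs s r) * cmod (fs s r))" by (simp add: af_def norm_divide norm_mult)
      also have "\<dots> \<le> 2 / (\<epsilon> * \<epsilon>)"
        using e1 \<epsilon> by (intro divide_left_mono mult_mono mult_pos_pos) auto
      finally show ?thesis by (simp add: power2_eq_square)
    qed
    have "cmod (b r) \<le> cmod (a r - af s r) * cmod (complex_of_real h * w s r + complex_of_real (E r))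
        + cmod (af s r) * \<bar>E r - h * Dl s r\<bar>"
      unfolding b_def using norm_triangle_ineq[of "(a r - af s r) * (complex_of_real h * w s r + complex_of_real (E r))"
        "af s r * (complex_of_real (E r) - complex_of_real h * complex_of_real (Dl s r))"]
      by (simp add: norm_mult flip: of_real_mult of_real_diff)
    also have "\<dots> \<le> (2 * (CA * max 1 T * \<bar>h\<bar>) / \<epsilon>^3) * (\<bar>h\<bar> * (Cw * max 1 T + M * max 1 T))
        + (2 / \<epsilon>^2) * (2 * M * (\<bar>h\<bar> powr \<alpha> * \<bar>h\<bar>))"
      using ad hw afb EhD[OF r] CA \<epsilon> by (intro add_mono mult_mono) auto
    also have "\<dots> = Cd1 * \<bar>h\<bar>^2 + Cd2 * (\<bar>h\<bar> powr \<alpha> * \<bar>h\<bar>)"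
    proof -
      have gen: "(2 * (CA * max 1 T * y) / \<epsilon>^3) * (y * (Cw * max 1 T + M * max 1 T))
        + (2 / \<epsilon>^2) * (2 * M * (y powr \<alpha> * y)) = Cd1 * y^2 + Cd2 * (y powr \<alpha> * y)" for y
        by (simp add: Cd1_def Cd2_def power2_eq_square algebra_simps)
      show ?thesis by (rule gen)
    qed
    also have "\<dots> = Cd1 * h^2 + Cd2 * (\<bar>h\<bar> powr \<alpha> * \<bar>h\<bar>)" by simp
    finally show "cmod (b r) \<le> 0 / (r + c0) + 0 / sqrt (r + c0) + (Cd1 * h^2 + Cd2 * (\<bar>h\<bar> powr \<alpha> * \<bar>h\<bar>))" by simp
  next
    show "continuous_on {0..u} a" unfolding a_def by (rule a_cont[OF s1 s2]) (use u s' in auto)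
  qed
  moreover have "D 0 = 0" using G0[OF s1] G0[OF s2] by (simp add: D_def w0)
  ultimately have Db: "cmod (D u) \<le> exp (Kc * T) * (Cd1 * h^2 + Cd2 * (\<bar>h\<bar> powr \<alpha> * \<bar>h\<bar>)) * T" by simp
  have "fs s' u - fs s u - complex_of_real h * W s u = D u + complex_of_real (E u - h * Dl s u)"
    unfolding fdiff by (simp add: W_def algebra_simps)
  then have "cmod (fs s' u - fs s u - complex_of_real h * W s u) \<le> cmod (D u) + \<bar>E u - h * Dl s u\<bar>"
    using norm_triangle_ineq[of "D u" "complex_of_real (E u - h * Dl s u)"] by (simp del: of_real_diff of_real_mult)
  also have "\<dots> \<le> exp (Kc * T) * (Cd1 * h^2 + Cd2 * (\<bar>h\<bar> powr \<alpha> * \<bar>h\<bar>)) * T + 2 * M * (\<bar>h\<bar> powr \<alpha> * \<bar>h\<bar>)"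
    using Db EhD[of u] u by (intro add_mono) auto
  finally show ?thesis by (simp add: h_def)
qed

end

context loew begin

lemma fs_deriv:
  assumes u: "0 \<le> u" "u \<le> s" "s \<le> T"
  shows "((\<lambda>s'. fs s' u) has_vector_derivative W s u) (at s within {u..T})"
proof -
  define C1 where "C1 = exp (Kc * T) * Cd1 * T"
  define C3 where "C3 = exp (Kc * T) * Cd2 * T + 2 * M"
  have C1: "0 \<le> C1" using CA Cw M1 \<epsilon> T by (simp add: C1_def Cd1_def)
  have C3: "0 \<le> C3" using M1 \<epsilon> T by (simp add: C3_def Cd2_def)
  define g where "g y = C1 * \<bar>y - s\<bar> + C3 * \<bar>y - s\<bar> powr \<alpha>" for y
  have bnd: "norm ((1 / norm (y - s)) *\<^sub>R ((\<lambda>s'. fs s' u) y - ((\<lambda>s'. fs s' u) s + (y - s) *\<^sub>R W s u))) \<le> g y"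
    if y: "y \<in> {u..T}" for y
  proof (cases "y = s")
    case True
    then show ?thesis using C1 C3 by (simp add: g_def)
  next
    case False
    define h where "h = y - s"
    have hpos: "0 < \<bar>h\<bar>" using False by (simp add: h_def)
    have e: "cmod (fs y u - fs s u - complex_of_real h * W s u)
       \<le> exp (Kc * T) * (Cd1 * h^2 + Cd2 * (\<bar>h\<bar> powr \<alpha> * \<bar>h\<bar>)) * T + 2 * M * (\<bar>h\<bar> powr \<alpha> * \<bar>h\<bar>)"
      unfolding h_def by (rule diff_est) (use u y in auto)
    have "exp (Kc * T) * (Cd1 * h^2 + Cd2 * (\<bar>h\<bar> powr \<alpha> * \<bar>h\<bar>)) * T + 2 * M * (\<bar>h\<bar> powr \<alpha> * \<bar>h\<bar>)
        = (C1 * \<bar>h\<bar> + C3 * \<bar>h\<bar> powr \<alpha>) * \<bar>h\<bar>"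
      by (simp add: C1_def C3_def power2_eq_square algebra_simps abs_mult_self_eq)
    then have e2: "cmod (fs y u - fs s u - complex_of_real h * W s u) \<le> (C1 * \<bar>h\<bar> + C3 * \<bar>h\<bar> powr \<alpha>) * \<bar>h\<bar>"
      using e by simp
    have eq: "(\<lambda>s'. fs s' u) y - ((\<lambda>s'. fs s' u) s + (y - s) *\<^sub>R W s u) = fs y u - fs s u - complex_of_real h * W s u"
      by (simp add: h_def scaleR_conv_of_real)
    have "norm ((1 / norm (y - s)) *\<^sub>R ((\<lambda>s'. fs s' u) y - ((\<lambda>s'. fs s' u) s + (y - s) *\<^sub>R W s u)))
        = cmod (fs y u - fs s u - complex_of_real h * W s u) / \<bar>h\<bar>"
      unfolding eq norm_scaleR by (simp add: h_def)
    also have "\<dots> \<le> (C1 * \<bar>h\<bar> + C3 * \<bar>h\<bar> powr \<alpha>) * \<bar>h\<bar> / \<bar>h\<bar>"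
      by (rule divide_right_mono[OF e2]) (use hpos in auto)
    also have "\<dots> = g y" using hpos by (simp add: g_def h_def)
    finally show ?thesis .
  qed
  have ev: "eventually (\<lambda>y. norm ((1 / norm (y - s)) *\<^sub>R ((\<lambda>s'. fs s' u) y - ((\<lambda>s'. fs s' u) s + (y - s) *\<^sub>R W s u))) \<le> g y) (at s within {u..T})"
    unfolding eventually_at_filter by (rule always_eventually) (use bnd in auto)
  have t0: "((\<lambda>y. \<bar>y - s\<bar>) \<longlongrightarrow> 0) (at s within {u..T})"
    by (rule tendsto_rabs_zero) (rule LIM_zero[OF tendsto_ident_at, of s, simplified])
  have t1: "((\<lambda>y. \<bar>y - s\<bar> powr \<alpha>) \<longlongrightarrow> 0) (at s within {u..T})"
    by (rule tendsto_zero_powrI[OF t0 tendsto_const]) (use \<alpha> in auto)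
  have tg: "(g \<longlongrightarrow> 0) (at s within {u..T})"
    unfolding g_def by (rule tendsto_add_zero[OF tendsto_mult_right_zero[OF t0] tendsto_mult_right_zero[OF t1]])
  show ?thesis
    unfolding has_vector_derivative_def has_derivative_within
    by (intro conjI bounded_linear_scaleR_left Lim_null_comparison[OF ev tg])
qed

lemma ds_eq:
  assumes u: "0 \<le> u" "u \<le> s" "s \<le> T" "u < T"
  shows "ds_fsol T dlam u s \<epsilon> = W s u"
proof -
  have D: "((\<lambda>s'. fsol dlam u s' \<epsilon>) has_vector_derivative W s u) (at s within {u..T})"
  proof (rule has_vector_derivative_transform_within[OF fs_deriv[OF u(1-3)] zero_less_one])
    show "s \<in> {u..T}" using u by auto
    fix s' assume "s' \<in> {u..T}"
    then show "fs s' u = fsol dlam u s' \<epsilon>"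
      using fsol_eq[OF _ _ fs_sol] u by (metis atLeastAtMost_iff order_trans)
  qed
  show ?thesis unfolding ds_fsol_def
    by (rule vector_derivative_within_closed_interval[OF u(4) _ D]) (use u in auto)
qed

end

definition "C2f M T = 2 + M^2 * (T + 1)"
definition "CAf M T = exp (16 * M^2 * T) * 2 * C2f M T * M / (6 / 25) + (M::real)"
definition "Cwf M T = exp (16 * M^2 * T) * 2 * C2f M T * M / (6 / 25)"
definition "B2f M T = 4 * CAf M T * C2f M T * sqrt (C2f M T) * (Cwf M T + M) * max 1 (T::real)"
definition "CBf M T = exp (16 * M^2 * T) * (4 * C2f M T * M / (6 / 25) + 2 * B2f M T * sqrt (T + 1)) + 2 * (M::real)"
definition "cfin M T = max (CAf M T) (max (2 * (Cwf M T + M)) (CBf M T))"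

context loew begin

lemma CA_eq: "CA = CAf M T" by (simp add: CA_def CAf_def Kc_def C2_def C2f_def \<kappa>0_def)
lemma Cw_eq: "Cw = Cwf M T" by (simp add: Cw_def Cwf_def Kc_def C2_def C2f_def \<kappa>0_def)
lemma CB_eq: "CB = CBf M T"
  by (simp add: CB_def CBf_def B2c_def B2f_def CA_eq Cw_eq Kc_def C2_def C2f_def \<kappa>0_def)

lemma main_bounds:
  assumes u: "0 \<le> u" "u \<le> s" and \<delta>: "0 \<le> \<delta>" "s + \<delta> \<le> T"
  shows "cmod (fsol dlam u (s + \<delta>) \<epsilon> - fsol dlam u s \<epsilon>) \<le> cfin M T * min (u * \<delta> powr \<alpha>) (\<delta> * u powr \<alpha>)"
    and "cmod (ds_fsol T dlam u (s + \<delta>) \<epsilon> - ds_fsol T dlam u s \<epsilon>) \<le> cfin M T * (1 + \<epsilon> / \<alpha>) * min (u powr \<alpha>) (\<delta> powr \<alpha>)"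
proof -
  have s1: "0 \<le> s + \<delta>" "s + \<delta> \<le> T" and s2: "0 \<le> s" "s \<le> T" using u \<delta> by auto
  have mn: "0 \<le> min (u * \<delta> powr \<alpha>) (\<delta> * u powr \<alpha>)" using u \<delta> by simp
  have "fsol dlam u (s + \<delta>) \<epsilon> = fs (s + \<delta>) u" by (rule fsol_eq[OF s1 fs_sol[OF s1]]) (use u \<delta> in auto)
  moreover have "fsol dlam u s \<epsilon> = fs s u" by (rule fsol_eq[OF s2 fs_sol[OF s2]]) (use u in auto)
  ultimately have "cmod (fsol dlam u (s + \<delta>) \<epsilon> - fsol dlam u s \<epsilon>) \<le> CA * min (u * \<delta> powr \<alpha>) (\<delta> * u powr \<alpha>)"
    using first_bound[OF u \<delta>] by simp
  also have "\<dots> \<le> cfin M T * min (u * \<delta> powr \<alpha>) (\<delta> * u powr \<alpha>)"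
    using mn by (intro mult_right_mono) (auto simp: CA_eq cfin_def)
  finally show "cmod (fsol dlam u (s + \<delta>) \<epsilon> - fsol dlam u s \<epsilon>) \<le> cfin M T * min (u * \<delta> powr \<alpha>) (\<delta> * u powr \<alpha>)" .
  have cf: "0 \<le> cfin M T" using CA by (simp add: CA_eq cfin_def)
  have mn2: "0 \<le> min (u powr \<alpha>) (\<delta> powr \<alpha>)" by simp
  have ea: "1 \<le> 1 + \<epsilon> / \<alpha>" using \<epsilon> \<alpha> by simp
  show "cmod (ds_fsol T dlam u (s + \<delta>) \<epsilon> - ds_fsol T dlam u s \<epsilon>) \<le> cfin M T * (1 + \<epsilon> / \<alpha>) * min (u powr \<alpha>) (\<delta> powr \<alpha>)"
  proof (cases "\<delta> = 0")
    case True
    then show ?thesis using cf mn2 ea by simp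
  next
    case False
    then have uT: "u < T" using u \<delta> by auto
    have d1: "ds_fsol T dlam u (s + \<delta>) \<epsilon> = W (s + \<delta>) u" by (rule ds_eq) (use u \<delta> uT in auto)
    have d2: "ds_fsol T dlam u s \<epsilon> = W s u" by (rule ds_eq) (use u \<delta> uT in auto)
    have b1: "cmod (W (s + \<delta>) u - W s u) \<le> 2 * (Cw + M) * u powr \<alpha>"
    proof -
      have "cmod (W (s + \<delta>) u - W s u) \<le> cmod (W (s + \<delta>) u) + cmod (W s u)" by (rule norm_triangle_ineq4)
      also have "\<dots> \<le> (Cw + M) * u powr \<alpha> + (Cw + M) * u powr \<alpha>"
        using W_bound[OF s1, of u] W_bound[OF s2, of u] u \<delta> by (intro add_mono) auto
      finally show ?thesis by (simp add: algebra_simps)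
    qed
    have b2: "cmod (W (s + \<delta>) u - W s u) \<le> CB * \<delta> powr \<alpha>" by (rule W_diff[OF u \<delta>])
    have "cmod (W (s + \<delta>) u - W s u) \<le> cfin M T * min (u powr \<alpha>) (\<delta> powr \<alpha>)"
    proof (cases "u powr \<alpha> \<le> \<delta> powr \<alpha>")
      case True
      have "cmod (W (s + \<delta>) u - W s u) \<le> 2 * (Cw + M) * u powr \<alpha>" by (rule b1)
      also have "\<dots> \<le> cfin M T * u powr \<alpha>" by (intro mult_right_mono) (auto simp: cfin_def Cw_eq)
      finally show ?thesis using True by (simp add: min_def)
    next
      case False
      have "cmod (W (s + \<delta>) u - W s u) \<le> CB * \<delta> powr \<alpha>" by (rule b2)
      also have "\<dots> \<le> cfin M T * \<delta> powr \<alpha>" by (intro mult_right_mono) (auto simp: cfin_def CB_eq)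
      finally show ?thesis using False by (simp add: min_def)
    qed
    also have "\<dots> \<le> cfin M T * (1 + \<epsilon> / \<alpha>) * min (u powr \<alpha>) (\<delta> powr \<alpha>)"
    proof -
      have "cfin M T * 1 \<le> cfin M T * (1 + \<epsilon> / \<alpha>)" using cf ea by (intro mult_left_mono) auto
      then show ?thesis using mn2 by (intro mult_right_mono) auto
    qed
    finally show ?thesis using d1 d2 by simp
  qed
qed

end

theorem lemma3p3:
  fixes M T :: real
  assumes "0 < T"
  shows "\<exists>c::real. \<forall>\<alpha> lam dlam. 0 < \<alpha> \<and> \<alpha> \<le> 1 \<and> C1alpha T \<alpha> M lam dlam \<and> half_holder_le1 T lam \<longrightarrow>
    (\<forall>u s \<delta> \<epsilon>. 0 \<le> u \<and> u \<le> s \<and> 0 \<le> \<delta> \<and> s + \<delta> \<le> T \<and> 0 < \<epsilon> \<and> \<epsilon> \<le> 1 \<longrightarrow>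
       cmod (fsol dlam u (s + \<delta>) \<epsilon> - fsol dlam u s \<epsilon>)
         \<le> c * min (u * \<delta> powr \<alpha>) (\<delta> * u powr \<alpha>) \<and>
       cmod (ds_fsol T dlam u (s + \<delta>) \<epsilon> - ds_fsol T dlam u s \<epsilon>)
         \<le> c * (1 + \<epsilon> / \<alpha>) * min (u powr \<alpha>) (\<delta> powr \<alpha>))"
proof (intro exI[of _ "cfin (max M 1) T"] allI impI conjI)
  fix \<alpha> :: real and lam dlam :: "real \<Rightarrow> real" and u s \<delta> \<epsilon> :: real
  assume H: "0 < \<alpha> \<and> \<alpha> \<le> 1 \<and> C1alpha T \<alpha> M lam dlam \<and> half_holder_le1 T lam"
    and P: "0 \<le> u \<and> u \<le> s \<and> 0 \<le> \<delta> \<and> s + \<delta> \<le> T \<and> 0 < \<epsilon> \<and> \<epsilon> \<le> 1"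
  have C: "C1alpha T \<alpha> M lam dlam" using H by blast
  interpret L: loew T "max M 1" \<alpha> lam dlam \<epsilon>
  proof
    show "0 < T" by (rule assms)
    show "1 \<le> max M 1" by simp
    show "0 < \<alpha>" "\<alpha> \<le> 1" using H by auto
    show "\<And>t. t \<in> {0..T} \<Longrightarrow> (lam has_real_derivative dlam t) (at t within {0..T})"
      using C by (simp add: C1alpha_def)
    show "continuous_on {0..T} dlam" using C by (simp add: C1alpha_def)
    show "\<And>t. t \<in> {0..T} \<Longrightarrow> \<bar>dlam t\<bar> \<le> max M 1"
      using C unfolding C1alpha_def by (meson max.coboundedI1)
    show "\<And>t s. t \<in> {0..T} \<Longrightarrow> s \<in> {0..T} \<Longrightarrow> \<bar>dlam t - dlam s\<bar> \<le> max M 1 * \<bar>t - s\<bar> powr \<alpha>"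
    proof -
      fix t s assume ts: "t \<in> {0..T}" "s \<in> {0..T}"
      have "\<bar>dlam t - dlam s\<bar> \<le> M * \<bar>t - s\<bar> powr \<alpha>" using C ts unfolding C1alpha_def by blast
      also have "\<dots> \<le> max M 1 * \<bar>t - s\<bar> powr \<alpha>" by (intro mult_right_mono) auto
      finally show "\<bar>dlam t - dlam s\<bar> \<le> max M 1 * \<bar>t - s\<bar> powr \<alpha>" .
    qed
    show "0 < \<epsilon>" "\<epsilon> \<le> 1" using P by auto
  qed
  show "cmod (fsol dlam u (s + \<delta>) \<epsilon> - fsol dlam u s \<epsilon>) \<le> cfin (max M 1) T * min (u * \<delta> powr \<alpha>) (\<delta> * u powr \<alpha>)"
    using L.main_bounds(1) P by auto
  show "cmod (ds_fsol T dlam u (s + \<delta>) \<epsilon> - ds_fsol T dlam u s \<epsilon>) \<le> cfin (max M 1) T * (1 + \<epsilon> / \<alpha>) * min (u powr \<alpha>) (\<delta> powr \<alpha>)"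
    using L.main_bounds(2) P by auto
qed

end
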